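(* Let $T_n$ be the random variable $\operatorname{des}(w)+\operatorname{des}(w^{-1})$ for $w$ uniform in the Coxeter group of type $\mathrm{A}_n$ (i.e. $\operatorname{Sym}(n+1)$), $n\ge 3$. Then $$\mathbb{E}\big((T_n-\mathbb{E}(T_n))^4\big)=\frac{1}{60}\left(5n^2+79n+258\right)-\frac{5n+2}{n(n+1)}.$$
   Context: $\operatorname{des}(w)=|\{s\in S: l_S(ws)<l_S(w)\}|$ with $S$ the adjacent transpositions and $l_S$ the word length. *)

theory Defs
  imports "HOL-Probability.Probability" "HOL-Combinatorics.Permutations"
begin

text \<open>Type A_n: the symmetric group Sym(n+1), realised as permutations of {0..n}.
  Simple generators S: adjacent transpositions s_i = (i i+1), i < n.\<close>

definition adj_trans :: "nat \<Rightarrow> nat \<Rightarrow> nat" where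
  "adj_trans i = Transposition.transpose i (Suc i)"

definition gen_word :: "nat list \<Rightarrow> nat \<Rightarrow> nat" where
  "gen_word is = foldr (\<lambda>i f. adj_trans i \<circ> f) is id"

definition word_length :: "nat \<Rightarrow> (nat \<Rightarrow> nat) \<Rightarrow> nat" where
  "word_length n w = (LEAST k. \<exists>is. length is = k \<and> set is \<subseteq> {..<n} \<and> w = gen_word is)"

definition des :: "nat \<Rightarrow> (nat \<Rightarrow> nat) \<Rightarrow> nat" where
  "des n w = card {i \<in> {..<n}. word_length n (w \<circ> adj_trans i) < word_length n w}"

definition T_stat :: "nat \<Rightarrow> (nat \<Rightarrow> nat) \<Rightarrow> real" where
  "T_stat n w = real (des n w + des n (inv w))"

definition unif_A :: "nat \<Rightarrow> (nat \<Rightarrow> nat) pmf" where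
  "unif_A n = pmf_of_set {w. w permutes {0..n}}"

end

theory Submission
  imports Defs "HOL-Combinatorics.Multiset_Permutations"
begin

abbreviation P :: "nat \<Rightarrow> nat list set" where
  "P N \<equiv> permutations_of_set {0..<N}"

fun dl :: "nat list \<Rightarrow> nat" where
  "dl (x # y # zs) = (if y < x then 1 else 0) + dl (y # zs)"
| "dl _ = 0"

lemma dl_Cons: "dl (x # ys) = dl ys + (if ys \<noteq> [] \<and> hd ys < x then 1 else 0)"
  by (cases ys) auto

lemma dl_append:
  "dl (xs @ ys) = dl xs + dl ys + (if xs \<noteq> [] \<and> ys \<noteq> [] \<and> hd ys < last xs then 1 else 0)"
proof (induction xs)
  case Nil then show ?case by simp
next
  case (Cons x xs)
  show ?case
  proof (cases xs)
    case Nil then show ?thesis by (cases ys) auto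
  next
    case (Cons y zs)
    then show ?thesis using Cons.IH by (simp add: dl_Cons)
  qed
qed

lemma dl_sum: "dl L = (\<Sum>i<length L - 1. if L ! Suc i < L ! i then 1 else 0)"
proof (induction L rule: dl.induct)
  case (1 x y zs)
  have "(\<Sum>i<length (x # y # zs) - 1. if (x # y # zs) ! Suc i < (x # y # zs) ! i then 1 else 0)
     = (\<Sum>i<Suc (length (y # zs) - 1). if (x # y # zs) ! Suc i < (x # y # zs) ! i then 1 else (0::nat))"
    by simp
  also have "\<dots> = (if y < x then 1 else 0) + (\<Sum>i<length (y # zs) - 1. if (y # zs) ! Suc i < (y # zs) ! i then 1 else 0)"
    by (subst sum.lessThan_Suc_shift) simp
  finally show ?case using 1 by simp
qed auto

lemma dl_le: "dl L \<le> length L - 1"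
proof -
  have "dl L \<le> (\<Sum>i<length L - 1. 1)" unfolding dl_sum by (rule sum_mono) auto
  then show ?thesis by simp
qed

definition ins :: "nat \<Rightarrow> nat \<Rightarrow> nat list \<Rightarrow> nat list" where
  "ins s x L = take s L @ x # drop s L"

lemma dl_ins:
  assumes "\<forall>y\<in>set L. y < x" "s \<le> length L"
  shows "dl (ins s x L) + (if 0 < s \<and> s < length L \<and> L ! s < L ! (s - 1) then 1 else 0)
       = dl L + (if s < length L then 1 else 0)"
proof -
  have L: "L = take s L @ drop s L" by simp
  have e1: "dl (ins s x L) = dl (take s L) + dl (x # drop s L)
      + (if take s L \<noteq> [] \<and> last (take s L) > x then 1 else 0)"
    unfolding ins_def by (subst dl_append) simp
  have "last (take s L) \<in> set L" if "take s L \<noteq> []"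
    using that by (metis in_set_takeD last_in_set)
  then have e2: "(if take s L \<noteq> [] \<and> last (take s L) > x then 1 else 0) = (0::nat)"
    using assms(1) by fastforce
  have hd: "drop s L \<noteq> [] \<Longrightarrow> hd (drop s L) < x"
    using assms(1) by (metis hd_in_set in_set_dropD)
  have e3: "dl (x # drop s L) = dl (drop s L) + (if s < length L then 1 else 0)"
    using hd by (simp add: dl_Cons)
  have e4: "dl L = dl (take s L) + dl (drop s L)
      + (if take s L \<noteq> [] \<and> drop s L \<noteq> [] \<and> hd (drop s L) < last (take s L) then 1 else 0)"
    by (subst L) (subst dl_append, simp)
  have e5: "(take s L \<noteq> [] \<and> drop s L \<noteq> [] \<and> hd (drop s L) < last (take s L))
     \<longleftrightarrow> (0 < s \<and> s < length L \<and> L ! s < L ! (s - 1))"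
  proof -
    have "0 < s \<Longrightarrow> last (take s L) = L ! (s - 1)"
      using assms(2) by (subst last_conv_nth) (auto simp: min_def)
    then show ?thesis using assms(2) by (auto simp: hd_drop_conv_nth)
  qed
  show ?thesis using e1 e2 e3 e4 e5 by simp
qed

lemma sum_b:
  "(\<Sum>s\<le>length L. if 0 < s \<and> s < length L \<and> L ! s < L ! (s - 1) then 1 else 0) = dl L"
proof (cases "length L")
  case 0 then show ?thesis by simp
next
  case (Suc m)
  have "(\<Sum>s\<le>length L. if 0 < s \<and> s < length L \<and> L ! s < L ! (s - 1) then 1 else (0::nat))
      = (\<Sum>i\<le>m. if Suc i < length L \<and> L ! Suc i < L ! i then 1 else 0)"
    unfolding Suc by (subst sum.atMost_Suc_shift) simp
  also have "\<dots> = (\<Sum>i<m. if Suc i < length L \<and> L ! Suc i < L ! i then 1 else 0)"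
    using Suc by (simp add: lessThan_Suc_atMost[symmetric])
  also have "\<dots> = dl L" unfolding dl_sum using Suc by (intro sum.cong) auto
  finally show ?thesis .
qed

lemma sum_ins:
  fixes f :: "nat \<Rightarrow> real"
  assumes "\<forall>y\<in>set L. y < x"
  shows "(\<Sum>s\<le>length L. f (dl (ins s x L)))
       = real (dl L + 1) * f (dl L) + (real (length L) - real (dl L)) * f (dl L + 1)"
proof -
  define a where "a s = (if s < length L then 1 else 0::nat)" for s
  define b where "b s = (if 0 < s \<and> s < length L \<and> L ! s < L ! (s - 1) then 1 else 0::nat)" for s
  have key: "f (dl (ins s x L)) = f (dl L) + (real (a s) - real (b s)) * (f (dl L + 1) - f (dl L))"
    if "s \<le> length L" for s
    using dl_ins[OF assms that] unfolding a_def b_def by (auto split: if_splits)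
  have "(\<Sum>s\<le>length L. f (dl (ins s x L)))
      = (\<Sum>s\<le>length L. f (dl L) + (real (a s) - real (b s)) * (f (dl L + 1) - f (dl L)))"
    using key by (intro sum.cong) auto
  also have "\<dots> = real (Suc (length L)) * f (dl L)
      + (real (\<Sum>s\<le>length L. a s) - real (\<Sum>s\<le>length L. b s)) * (f (dl L + 1) - f (dl L))"
    by (simp add: sum.distrib sum_subtractf sum_distrib_right[symmetric])
  also have "(\<Sum>s\<le>length L. a s) = length L"
  proof -
    have "(\<Sum>s\<le>length L. a s) = (\<Sum>s<length L. 1)"
      unfolding a_def lessThan_Suc_atMost[symmetric] by (simp add: sum.lessThan_Suc)
    then show ?thesis by simp
  qed
  also have "(\<Sum>s\<le>length L. b s) = dl L" unfolding b_def by (rule sum_b)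
  finally show ?thesis by (simp add: algebra_simps)
qed

lemma P_mem: "L \<in> P N \<longleftrightarrow> distinct L \<and> set L = {0..<N}"
  by (auto simp: permutations_of_set_def)

lemma P_length: "L \<in> P N \<Longrightarrow> length L = N"
  by (metis P_mem atLeastLessThan_upt card_atLeastLessThan diff_zero distinct_card)

lemma ins_in_P:
  assumes "L \<in> P N" "s \<le> N"
  shows "ins s N L \<in> P (Suc N)"
proof -
  have d: "distinct L" and st: "set L = {0..<N}" using assms(1) by (auto simp: P_mem)
  have "distinct (take s L @ drop s L)" using d by simp
  moreover have "N \<notin> set (take s L)" "N \<notin> set (drop s L)"
    using st by (auto dest: in_set_takeD in_set_dropD)
  ultimately have "distinct (ins s N L)" unfolding ins_def by (simp only: distinct_append) auto
  moreover have "set (ins s N L) = insert N (set L)"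
    unfolding ins_def by (metis Un_insert_right append_take_drop_id list.simps(15) set_append)
  ultimately show ?thesis using st by (auto simp: P_mem)
qed

lemma ins_inj:
  assumes "L \<in> P N" "L' \<in> P N" "s \<le> N" "s' \<le> N" "ins s N L = ins s' N L'"
  shows "L = L' \<and> s = s'"
proof -
  have f: "filter (\<lambda>y. y \<noteq> N) (ins s N M) = M" if "M \<in> P N" for s M
  proof -
    have "\<forall>y\<in>set M. y \<noteq> N" using that by (auto simp: P_mem)
    then have "\<forall>y\<in>set (take s M). y \<noteq> N" "\<forall>y\<in>set (drop s M). y \<noteq> N"
      by (auto dest: in_set_takeD in_set_dropD)
    then show ?thesis unfolding ins_def by simp
  qed
  have t: "length (takeWhile (\<lambda>y. y \<noteq> N) (ins s N M)) = s" if "M \<in> P N" "s \<le> N" for s M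
  proof -
    have "\<forall>y\<in>set M. y \<noteq> N" using that by (auto simp: P_mem)
    then have "\<forall>y\<in>set (take s M). y \<noteq> N" by (auto dest: in_set_takeD)
    then show ?thesis unfolding ins_def using that P_length[OF that(1)] by (simp add: takeWhile_append2)
  qed
  show ?thesis using f[OF assms(1), of s] f[OF assms(2), of s'] t[OF assms(1,3)] t[OF assms(2,4)] assms(5)
    by metis
qed

lemma sum_P_Suc:
  fixes F :: "nat list \<Rightarrow> real"
  shows "(\<Sum>L\<in>P (Suc N). F L) = (\<Sum>L\<in>P N. \<Sum>s\<le>N. F (ins s N L))"
proof -
  have img: "(\<lambda>(L, s). ins s N L) ` (P N \<times> {..N}) = P (Suc N)"
  proof
    show "(\<lambda>(L, s). ins s N L) ` (P N \<times> {..N}) \<subseteq> P (Suc N)"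
      using ins_in_P by auto
  next
    show "P (Suc N) \<subseteq> (\<lambda>(L, s). ins s N L) ` (P N \<times> {..N})"
    proof
      fix L' assume L': "L' \<in> P (Suc N)"
      then have "N \<in> set L'" by (auto simp: P_mem)
      then obtain xs ys where xs: "L' = xs @ N # ys" by (meson split_list)
      have "distinct L'" "set L' = {0..<Suc N}" using L' by (auto simp: P_mem)
      then have d: "distinct (xs @ ys)" and "N \<notin> set (xs @ ys)" and
        s1: "set (xs @ ys) = set L' - {N}" unfolding xs by auto
      have "{0..<Suc N} - {N} = {0..<N}" by auto
      then have "set (xs @ ys) = {0..<N}" using s1 \<open>set L' = {0..<Suc N}\<close> by simp
      note this d
      then have m: "xs @ ys \<in> P N" by (auto simp: P_mem)
      then have "length xs \<le> N" using P_length by fastforce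
      moreover have "ins (length xs) N (xs @ ys) = L'" unfolding ins_def xs by simp
      ultimately show "L' \<in> (\<lambda>(L, s). ins s N L) ` (P N \<times> {..N})"
        using m by (auto intro!: image_eqI[where x="(xs @ ys, length xs)"])
    qed
  qed
  have inj: "inj_on (\<lambda>(L, s). ins s N L) (P N \<times> {..N})"
    by (auto simp: inj_on_def dest: ins_inj)
  have "(\<Sum>L\<in>P N. \<Sum>s\<le>N. F (ins s N L)) = (\<Sum>(L, s)\<in>P N \<times> {..N}. F (ins s N L))"
    by (rule sum.cartesian_product)
  also have "\<dots> = (\<Sum>L'\<in>(\<lambda>(L, s). ins s N L) ` (P N \<times> {..N}). F L')"
    by (subst sum.reindex[OF inj]) (simp add: case_prod_beta)
  finally show ?thesis using img by simp
qed

definition Q :: "nat \<Rightarrow> (nat \<Rightarrow> real) \<Rightarrow> real" where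
  "Q N f = (\<Sum>L\<in>P N. f (dl L))"

lemma Q_Suc:
  "Q (Suc N) f = Q N (\<lambda>d. real (d + 1) * f d + (real N - real d) * f (d + 1))"
proof -
  have "Q (Suc N) f = (\<Sum>L\<in>P N. \<Sum>s\<le>N. f (dl (ins s N L)))"
    unfolding Q_def by (rule sum_P_Suc)
  also have "\<dots> = (\<Sum>L\<in>P N. real (dl L + 1) * f (dl L) + (real N - real (dl L)) * f (dl L + 1))"
  proof (intro sum.cong refl)
    fix L assume L: "L \<in> P N"
    then have "length L = N" "\<forall>y\<in>set L. y < N" by (auto simp: P_length P_mem)
    then show "(\<Sum>s\<le>N. f (dl (ins s N L))) = real (dl L + 1) * f (dl L) + (real N - real (dl L)) * f (dl L + 1)"
      using sum_ins[of L N f] by simp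
  qed
  finally show ?thesis unfolding Q_def .
qed

lemma Q_0: "Q 0 f = f 0"
  by (simp add: Q_def)


lemma Q_lin:
  "Q N (\<lambda>d. c0 + c1 * real d + c2 * real d ^ 2 + c3 * real d ^ 3 + c4 * real d ^ 4)
   = c0 * Q N (\<lambda>_. 1) + c1 * Q N (\<lambda>d. real d) + c2 * Q N (\<lambda>d. real d ^ 2)
     + c3 * Q N (\<lambda>d. real d ^ 3) + c4 * Q N (\<lambda>d. real d ^ 4)"
  unfolding Q_def by (simp add: sum.distrib sum_distrib_left)

lemma Q1': "Q (Suc 0) f = f 0"
  using Q_Suc[of 0 f] by (simp add: Q_0)
lemma Q2': "Q (Suc (Suc 0)) f = f 0 + f 1"
  by (subst Q_Suc) (simp add: Q1')
lemma Q3': "Q (Suc (Suc (Suc 0))) f = f 0 + 4 * f 1 + f 2"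
  by (subst Q_Suc) (simp add: Q2' numeral_2_eq_2)
lemma Q4': "Q (Suc (Suc (Suc (Suc 0)))) f = f 0 + 11 * f 1 + 11 * f 2 + f 3"
  by (subst Q_Suc) (simp add: Q3' numeral_2_eq_2 numeral_3_eq_3)
lemma Q4: "Q 4 f = f 0 + 11 * f 1 + 11 * f 2 + f 3"
  using Q4' by (simp add: eval_nat_numeral)

lemma Q_one: "Q N (\<lambda>_. 1) = fact N"
  unfolding Q_def by simp

definition e1 :: "nat \<Rightarrow> real" where "e1 N = (real N - 1) / 2"
definition e2 :: "nat \<Rightarrow> real" where "e2 N = 1/3 - 5/12 * real N + 1/4 * real N ^ 2"
definition e3 :: "nat \<Rightarrow> real" where
  "e3 N = -1/4 + 3/8 * real N - 1/4 * real N ^ 2 + 1/8 * real N ^ 3"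
definition e4 :: "nat \<Rightarrow> real" where
  "e4 N = 1/5 - 41/120 * real N + 13/48 * real N ^ 2 - 1/8 * real N ^ 3 + 1/16 * real N ^ 4"

lemma x1: "(1+(x::real)) * ((1+x - 1)/2) = x + x * ((x - 1)/2)"
  by (simp add: field_simps power2_eq_square power3_eq_cube power4_eq_xxxx)
lemma x2: "(1+(x::real)) * (1/3 - 5/12 * (1+x) + 1/4 * (1+x) ^ 2) = x + (2 * x - 1) * ((x - 1)/2)
    + (x - 1) * (1/3 - 5/12 * x + 1/4 * x ^ 2)"
  by (simp add: field_simps power2_eq_square power3_eq_cube power4_eq_xxxx)
lemma x3: "(1+(x::real)) * (-1/4 + 3/8 * (1+x) - 1/4 * (1+x) ^ 2 + 1/8 * (1+x) ^ 3) = x + (3 * x - 1) * ((x - 1)/2)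
    + (3 * x - 3) * (1/3 - 5/12 * x + 1/4 * x ^ 2) + (x - 2) * (-1/4 + 3/8 * x - 1/4 * x ^ 2 + 1/8 * x ^ 3)"
  by (simp add: field_simps power2_eq_square power3_eq_cube power4_eq_xxxx)
lemma x4: "(1+(x::real)) * (1/5 - 41/120*(1+x) + 13/48*(1+x)^2 - 1/8*(1+x)^3 + 1/16*(1+x)^4)
  = x + (4*x-1)*((x-1)/2) + (6*x-4)*(1/3 - 5/12*x + 1/4*x^2) + (4*x-6)*(-1/4+3/8*x-1/4*x^2+1/8*x^3)
    + (x-3)*(1/5 - 41/120*x + 13/48*x^2 - 1/8*x^3 + 1/16*x^4)"
  by (simp add: field_simps power2_eq_square power3_eq_cube power4_eq_xxxx)

lemma p1: "real (Suc N) * e1 (Suc N) = real N + real N * e1 N"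
  unfolding e1_def of_nat_Suc by (rule x1)
lemma p2: "real (Suc N) * e2 (Suc N) = real N + (2 * real N - 1) * e1 N + (real N - 1) * e2 N"
  unfolding e1_def e2_def of_nat_Suc by (rule x2)
lemma p3: "real (Suc N) * e3 (Suc N) = real N + (3 * real N - 1) * e1 N + (3 * real N - 3) * e2 N + (real N - 2) * e3 N"
  unfolding e1_def e2_def e3_def of_nat_Suc by (rule x3)
lemma p4: "real (Suc N) * e4 (Suc N) = real N + (4 * real N - 1) * e1 N + (6 * real N - 4) * e2 N
    + (4 * real N - 6) * e3 N + (real N - 3) * e4 N"
  unfolding e1_def e2_def e3_def e4_def of_nat_Suc by (rule x4)

lemma fact_step: "fact (Suc N) * (e::real) = fact N * (real (Suc N) * e)"
  by simp

lemma Q_closed: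
  assumes "N \<ge> 4"
  shows "Q N (\<lambda>d. real d) = fact N * e1 N \<and> Q N (\<lambda>d. real d ^ 2) = fact N * e2 N
    \<and> Q N (\<lambda>d. real d ^ 3) = fact N * e3 N \<and> Q N (\<lambda>d. real d ^ 4) = fact N * e4 N"
  using assms
proof (induction N rule: nat_induct_at_least)
  case base
  show ?case by (simp add: Q4 e1_def e2_def e3_def e4_def fact_numeral)
next
  case (Suc N)
  have f1: "(\<lambda>d. real (d + 1) * real d + (real N - real d) * real (d + 1))
     = (\<lambda>d. real N + real N * real d + 0 * real d ^ 2 + 0 * real d ^ 3 + 0 * real d ^ 4)"
    by (rule ext) (simp add: algebra_simps power2_eq_square)
  have f2: "(\<lambda>d. real (d + 1) * real d ^ 2 + (real N - real d) * real (d + 1) ^ 2)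
     = (\<lambda>d. real N + (2 * real N - 1) * real d + (real N - 1) * real d ^ 2 + 0 * real d ^ 3 + 0 * real d ^ 4)"
    by (rule ext) (simp add: algebra_simps power2_eq_square power3_eq_cube)
  have f3: "(\<lambda>d. real (d + 1) * real d ^ 3 + (real N - real d) * real (d + 1) ^ 3)
     = (\<lambda>d. real N + (3 * real N - 1) * real d + (3 * real N - 3) * real d ^ 2 + (real N - 2) * real d ^ 3 + 0 * real d ^ 4)"
    by (rule ext) (simp add: algebra_simps power2_eq_square power3_eq_cube power4_eq_xxxx)
  have f4: "(\<lambda>d. real (d + 1) * real d ^ 4 + (real N - real d) * real (d + 1) ^ 4)
     = (\<lambda>d. real N + (4 * real N - 1) * real d + (6 * real N - 4) * real d ^ 2 + (4 * real N - 6) * real d ^ 3 + (real N - 3) * real d ^ 4)"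
    by (rule ext) (simp add: algebra_simps power2_eq_square power3_eq_cube power4_eq_xxxx)
  have fs: "fact (Suc N) = real (Suc N) * fact N" by simp
  from Suc.IH have h1: "Q N (\<lambda>d. real d) = fact N * e1 N" and h2: "Q N (\<lambda>d. real d ^ 2) = fact N * e2 N"
    and h3: "Q N (\<lambda>d. real d ^ 3) = fact N * e3 N" and h4: "Q N (\<lambda>d. real d ^ 4) = fact N * e4 N" by auto
  show ?case
  proof (intro conjI)
    show "Q (Suc N) (\<lambda>d. real d) = fact (Suc N) * e1 (Suc N)"
      unfolding Q_Suc f1 Q_lin Q_one h1 h2 h3 h4 fact_step p1 by (simp add: algebra_simps)
    show "Q (Suc N) (\<lambda>d. real d ^ 2) = fact (Suc N) * e2 (Suc N)"
      unfolding Q_Suc f2 Q_lin Q_one h1 h2 h3 h4 fact_step p2 by (simp add: algebra_simps)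
    show "Q (Suc N) (\<lambda>d. real d ^ 3) = fact (Suc N) * e3 (Suc N)"
      unfolding Q_Suc f3 Q_lin Q_one h1 h2 h3 h4 fact_step p3 by (simp add: algebra_simps)
    show "Q (Suc N) (\<lambda>d. real d ^ 4) = fact (Suc N) * e4 (Suc N)"
      unfolding Q_Suc f4 Q_lin Q_one h1 h2 h3 h4 fact_step p4 by (simp add: algebra_simps)
  qed
qed


fun prec :: "nat list \<Rightarrow> nat \<Rightarrow> nat \<Rightarrow> bool" where
  "prec [] a b = False"
| "prec (x # xs) a b = ((x = a \<and> b \<in> set xs) \<or> prec xs a b)"

fun adj :: "nat list \<Rightarrow> nat \<Rightarrow> nat \<Rightarrow> bool" where
  "adj (x # y # zs) a b = ((x = a \<and> y = b) \<or> adj (y # zs) a b)"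
| "adj _ a b = False"

lemma prec_append:
  "prec (xs @ ys) a b \<longleftrightarrow> prec xs a b \<or> prec ys a b \<or> (a \<in> set xs \<and> b \<in> set ys)"
  by (induction xs) auto

lemma prec_set: "prec L a b \<Longrightarrow> a \<in> set L \<and> b \<in> set L"
  by (induction L) auto

lemma prec_map: "inj f \<Longrightarrow> prec (map f L) (f a) (f b) \<longleftrightarrow> prec L a b"
  by (induction L) (auto simp: inj_eq image_iff)

lemma prec_asym: "distinct L \<Longrightarrow> prec L a b \<Longrightarrow> \<not> prec L b a"
  by (induction L) (auto dest: prec_set)

lemma prec_irrefl: "distinct L \<Longrightarrow> \<not> prec L a a"
  using prec_asym by blast

lemma prec_total: "a \<in> set L \<Longrightarrow> b \<in> set L \<Longrightarrow> a \<noteq> b \<Longrightarrow> prec L a b \<or> prec L b a"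
  by (induction L) auto

lemma prec_trans: "distinct L \<Longrightarrow> prec L a b \<Longrightarrow> prec L b c \<Longrightarrow> prec L a c"
  by (induction L) (auto dest: prec_set)

lemma adj_Cons: "adj (x # L) a b \<longleftrightarrow> (L \<noteq> [] \<and> x = a \<and> hd L = b) \<or> adj L a b"
  by (cases L) auto

lemma adj_append:
  "adj (xs @ ys) a b \<longleftrightarrow> adj xs a b \<or> adj ys a b \<or> (xs \<noteq> [] \<and> ys \<noteq> [] \<and> last xs = a \<and> hd ys = b)"
proof (induction xs)
  case Nil then show ?case by simp
next
  case (Cons x xs)
  then show ?case by (cases xs) (auto simp: adj_Cons)
qed

lemma adj_split: "adj L a b \<Longrightarrow> \<exists>xs ys. L = xs @ a # b # ys"
proof (induction L a b rule: adj.induct)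
  case (1 x y zs a b)
  then show ?case
  proof (cases "x = a \<and> y = b")
    case True then show ?thesis by (intro exI[of _ "[]"] exI[of _ zs]) auto
  next
    case False
    then have "adj (y # zs) a b" using "1.prems" by auto
    then obtain xs ys where "y # zs = xs @ a # b # ys" using "1.IH" False by blast
    then have "x # y # zs = (x # xs) @ a # b # ys" by simp
    then show ?thesis by blast
  qed
qed auto

lemma adj_imp_prec: "adj L a b \<Longrightarrow> prec L a b"
  by (induction L a b rule: adj.induct) auto

lemma adj_map: "inj f \<Longrightarrow> adj (map f L) (f a) (f b) \<longleftrightarrow> adj L a b"
  by (induction L a b rule: adj.induct) (auto simp: inj_eq)

lemma adj_prec_after:
  assumes "distinct L" "adj L x y" "prec L x z" "z \<noteq> y"
  shows "prec L y z"
proof -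
  obtain xs ys where L: "L = xs @ x # y # ys" using adj_split[OF assms(2)] by blast
  show ?thesis using assms unfolding L by (auto simp: prec_append dest: prec_set)
qed

abbreviation tau :: "nat \<Rightarrow> nat \<Rightarrow> nat" where
  "tau m \<equiv> Transposition.transpose m (Suc m)"

definition sw :: "nat \<Rightarrow> nat list \<Rightarrow> nat list" where
  "sw m L = map (tau m) L"

lemma tau_lt: "x \<noteq> y \<Longrightarrow>
  (if tau m y < tau m x then 1 else 0) + (if x = Suc m \<and> y = m then 1 else 0)
  = (if y < x then 1 else 0) + (if x = m \<and> y = Suc m then (1::nat) else 0)"
  by (cases "x = m"; cases "x = Suc m"; cases "y = m"; cases "y = Suc m") (simp_all add: Transposition.transpose_def)

lemma dl_sw: "distinct L \<Longrightarrow>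
  dl (sw m L) + (if adj L (Suc m) m then 1 else 0) = dl L + (if adj L m (Suc m) then 1 else 0)"
proof (induction L rule: dl.induct)
  case (1 x y zs)
  have xy: "x \<noteq> y" using 1(2) by auto
  have IH: "dl (sw m (y # zs)) + (if adj (y # zs) (Suc m) m then 1 else 0)
      = dl (y # zs) + (if adj (y # zs) m (Suc m) then 1 else 0)" using 1 by auto
  have ex1: "\<not> (x = Suc m \<and> y = m \<and> adj (y # zs) (Suc m) m)"
    using 1(2) adj_imp_prec[of "y # zs"] prec_set[of zs] by auto
  have ex2: "\<not> (x = m \<and> y = Suc m \<and> adj (y # zs) m (Suc m))"
    using 1(2) adj_imp_prec[of "y # zs"] prec_set[of zs] by auto
  have d1: "dl (sw m (x # y # zs)) = (if tau m y < tau m x then 1 else 0) + dl (sw m (y # zs))"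
    by (simp add: sw_def)
  have d2: "dl (x # y # zs) = (if y < x then 1 else 0) + dl (y # zs)" by simp
  have a1: "(if adj (x # y # zs) (Suc m) m then 1 else 0)
      = (if x = Suc m \<and> y = m then 1 else 0) + (if adj (y # zs) (Suc m) m then 1 else (0::nat))"
    using ex1 by simp
  have a2: "(if adj (x # y # zs) m (Suc m) then 1 else 0)
      = (if x = m \<and> y = Suc m then 1 else 0) + (if adj (y # zs) m (Suc m) then 1 else (0::nat))"
    using ex2 by simp
  show ?case using IH tau_lt[OF xy, of m] d1 d2 a1 a2 by linarith
qed (auto simp: sw_def)

lemma inj_tau: "inj (tau m)"
  by (simp add: inj_transpose)

lemma prec_sw: "prec (sw m L) a b \<longleftrightarrow> prec L (tau m a) (tau m b)"
proof -
  have "prec (sw m L) a b \<longleftrightarrow> prec (map (tau m) L) (tau m (tau m a)) (tau m (tau m b))" by (simp add: sw_def)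
  also have "\<dots> \<longleftrightarrow> prec L (tau m a) (tau m b)" by (rule prec_map[OF inj_tau])
  finally show ?thesis .
qed

lemma adj_sw: "adj (sw m L) a b \<longleftrightarrow> adj L (tau m a) (tau m b)"
proof -
  have "adj (sw m L) a b \<longleftrightarrow> adj (map (tau m) L) (tau m (tau m a)) (tau m (tau m b))" by (simp add: sw_def)
  also have "\<dots> \<longleftrightarrow> adj L (tau m a) (tau m b)" by (rule adj_map[OF inj_tau])
  finally show ?thesis .
qed

lemma sum_sw:
  fixes F :: "nat list \<Rightarrow> real"
  assumes "Suc m < N"
  shows "(\<Sum>L\<in>P N. F L) = (\<Sum>L\<in>P N. F (sw m L))"
proof -
  have perm: "tau m permutes {0..<N}" using assms by (intro permutes_swap_id) auto
  have img: "map (tau m) ` P N = P N" by (rule permutations_of_set_image_permutes[OF perm])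
  have inj: "inj_on (map (tau m)) (P N)" by (intro inj_onI) (simp add: inj_map_eq_map inj_tau)
  have "(\<Sum>L\<in>P N. F L) = (\<Sum>L\<in>map (tau m) ` P N. F L)" using img by simp
  also have "\<dots> = (\<Sum>L\<in>P N. F (sw m L))" by (subst sum.reindex[OF inj]) (simp add: sw_def comp_def)
  finally show ?thesis .
qed

lemma sw_P: "Suc m < N \<Longrightarrow> L \<in> P N \<Longrightarrow> sw m L \<in> P N"
proof -
  assume a: "Suc m < N" "L \<in> P N"
  have perm: "tau m permutes {0..<N}" using a by (intro permutes_swap_id) auto
  have img: "map (tau m) ` P N = P N" by (rule permutations_of_set_image_permutes[OF perm])
  then show ?thesis using a unfolding sw_def by blast
qed


definition inc :: "nat \<Rightarrow> nat \<Rightarrow> nat" where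
  "inc u x = (if u < x then Suc x else x)"

fun ib :: "nat \<Rightarrow> nat \<Rightarrow> nat list \<Rightarrow> nat list" where
  "ib a b [] = []"
| "ib a b (x # xs) = (if x = b then a # x # xs else x # ib a b xs)"

definition um :: "nat \<Rightarrow> nat list \<Rightarrow> nat list" where
  "um u L = ib (Suc u) u (map (inc u) L)"

lemma inc_inj: "inj (inc u)"
  by (auto simp: inj_def inc_def split: if_splits)

lemma inc_eq_u: "inc u x = u \<longleftrightarrow> x = u"
  by (auto simp: inc_def)

lemma inc_ne_Suc: "inc u x \<noteq> Suc u"
  by (auto simp: inc_def)

lemma inc_mono: "strict_mono (inc u)"
  by (auto simp: strict_mono_def inc_def)

lemma ib_split: "b \<notin> set xs \<Longrightarrow> ib a b (xs @ b # ys) = xs @ a # b # ys"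
  by (induction xs) auto

lemma dl_map_mono: "strict_mono f \<Longrightarrow> dl (map f L) = dl L"
  by (induction L rule: dl.induct) (auto simp: strict_mono_less)

lemma um_split:
  assumes "L \<in> P M" "u < M"
  obtains xs ys where "L = xs @ u # ys" "um u L = map (inc u) xs @ Suc u # u # map (inc u) ys"
    "u \<notin> set xs"
proof -
  have "u \<in> set L" using assms by (auto simp: P_mem)
  then obtain xs ys where L: "L = xs @ u # ys" "u \<notin> set xs" by (meson split_list_first)
  have "u \<notin> set (map (inc u) xs)" using L(2) by (auto simp: inc_def split: if_splits)
  moreover have "map (inc u) L = map (inc u) xs @ u # map (inc u) ys" using L by (simp add: inc_def)
  ultimately have "um u L = map (inc u) xs @ Suc u # u # map (inc u) ys"
    unfolding um_def by (simp add: ib_split)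
  then show ?thesis using that L by blast
qed

lemma um_dl:
  assumes "L \<in> P M" "u < M"
  shows "dl (um u L) = Suc (dl L)"
proof -
  obtain xs ys where L: "L = xs @ u # ys" and U: "um u L = map (inc u) xs @ Suc u # u # map (inc u) ys"
    and nx: "u \<notin> set xs" using um_split[OF assms] by blast
  have m: "dl (map (inc u) Z) = dl Z" for Z by (rule dl_map_mono[OF inc_mono])
  have iu: "inc u u = u" by (simp add: inc_def)
  have m2: "dl (u # map (inc u) ys) = dl (u # ys)" using m[of "u # ys"] iu by simp
  have lst: "xs \<noteq> [] \<Longrightarrow> (Suc u < last (map (inc u) xs)) = (u < last xs)"
  proof -
    assume ne: "xs \<noteq> []"
    then have "last xs \<noteq> u" using nx last_in_set by metis
    then show ?thesis using ne by (auto simp: last_map inc_def)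
  qed
  have c1: "dl (um u L) = dl (map (inc u) xs) + dl (Suc u # u # map (inc u) ys)
      + (if xs \<noteq> [] \<and> Suc u < last (map (inc u) xs) then 1 else 0)"
    unfolding U by (subst dl_append) simp
  have c2: "dl (map (inc u) xs) + dl (Suc u # u # map (inc u) ys)
      + (if xs \<noteq> [] \<and> Suc u < last (map (inc u) xs) then 1 else 0)
      = dl xs + Suc (dl (u # ys)) + (if xs \<noteq> [] \<and> u < last xs then 1 else 0)"
    using m[of xs] m2 lst by auto
  have c3: "dl L = dl xs + dl (u # ys) + (if xs \<noteq> [] \<and> u < last xs then 1 else 0)"
    unfolding L by (subst dl_append) simp
  show ?thesis using c1 c2 c3 by simp
qed

lemma um_P:
  assumes "L \<in> P M" "u < M"
  shows "um u L \<in> P (Suc M)"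
proof -
  obtain xs ys where L: "L = xs @ u # ys" and U: "um u L = map (inc u) xs @ Suc u # u # map (inc u) ys"
    using um_split[OF assms] by blast
  have dL: "distinct L" and sL: "set L = {0..<M}" using assms by (auto simp: P_mem)
  have iu: "inc u u = u" by (simp add: inc_def)
  have hML: "map (inc u) L = map (inc u) xs @ u # map (inc u) ys" using L iu by simp
  have "distinct (map (inc u) L)" using dL by (simp add: distinct_map inj_on_def inc_inj[THEN injD])
  moreover have "Suc u \<notin> set (map (inc u) L)" by (auto simp: inc_def split: if_splits)
  ultimately have d: "distinct (um u L)" unfolding U using hML by auto
  have img: "inc u ` {0..<M} = {0..<Suc M} - {Suc u}"
  proof
    show "inc u ` {0..<M} \<subseteq> {0..<Suc M} - {Suc u}" using inc_ne_Suc by (auto simp: inc_def)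
  next
    show "{0..<Suc M} - {Suc u} \<subseteq> inc u ` {0..<M}"
    proof
      fix y assume y: "y \<in> {0..<Suc M} - {Suc u}"
      show "y \<in> inc u ` {0..<M}"
      proof (cases "y \<le> u")
        case True then show ?thesis using assms(2) by (intro image_eqI[of _ _ y]) (auto simp: inc_def)
      next
        case False then show ?thesis using y by (intro image_eqI[of _ _ "y - 1"]) (auto simp: inc_def)
      qed
    qed
  qed
  have "set (um u L) = insert (Suc u) (set (map (inc u) L))" unfolding U hML by auto
  also have "\<dots> = {0..<Suc M}" using img sL assms(2) by auto
  finally show ?thesis using d by (simp add: P_mem)
qed

lemma um_adj:
  assumes "L \<in> P M" "u < M"
  shows "adj (um u L) (Suc u) u"
proof -
  obtain xs ys where U: "um u L = map (inc u) xs @ Suc u # u # map (inc u) ys"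
    using um_split[OF assms] by blast
  show ?thesis unfolding U by (simp add: adj_append)
qed

lemma um_inj:
  assumes "L1 \<in> P M" "L2 \<in> P M" "u < M" "um u L1 = um u L2"
  shows "L1 = L2"
proof -
  have r: "remove1 (Suc u) (um u L) = map (inc u) L" if LM: "L \<in> P M" for L
  proof -
    obtain xs ys where L: "L = xs @ u # ys" and U: "um u L = map (inc u) xs @ Suc u # u # map (inc u) ys"
      using um_split[OF LM assms(3)] by blast
    have nS: "Suc u \<notin> set (map (inc u) xs)" by (auto simp: inc_def split: if_splits)
    have "remove1 (Suc u) (um u L) = map (inc u) xs @ u # map (inc u) ys"
      unfolding U using nS by (simp add: remove1_append)
    also have "\<dots> = map (inc u) L" unfolding L by (simp add: inc_def)
    finally show ?thesis .
  qed
  have "map (inc u) L1 = map (inc u) L2" using r[OF assms(1)] r[OF assms(2)] assms(4) by simp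
  then show ?thesis using inc_inj by (simp add: inj_map_eq_map)
qed

definition dec :: "nat \<Rightarrow> nat \<Rightarrow> nat" where
  "dec u x = (if Suc u < x then x - 1 else x)"

lemma um_surj:
  assumes "L \<in> P (Suc M)" "u < M" "adj L (Suc u) u"
  shows "\<exists>L'\<in>P M. um u L' = L"
proof -
  obtain xs ys where L: "L = xs @ Suc u # u # ys" using adj_split[OF assms(3)] by blast
  have dL: "distinct L" and sL: "set L = {0..<Suc M}" using assms by (auto simp: P_mem)
  define Z where "Z = xs @ u # ys"
  have nZ: "Suc u \<notin> set Z" using dL unfolding L Z_def by auto
  have dZ: "distinct Z" using dL unfolding L Z_def by auto
  have sZ: "set Z = {0..<Suc M} - {Suc u}" using sL dL unfolding L Z_def by auto
  define L' where "L' = map (dec u) Z"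
  have "\<forall>x\<in>set Z. inc u (dec u x) = x"
  proof
    fix x assume "x \<in> set Z"
    then have "x \<noteq> Suc u" using nZ by auto
    then show "inc u (dec u x) = x" unfolding inc_def dec_def by (cases "Suc u < x") auto
  qed
  then have id: "map (inc u) L' = Z" unfolding L'_def by (simp add: map_idI)
  have dL': "distinct L'" using dZ id by (metis distinct_map)
  have img: "inc u ` {0..<M} = {0..<Suc M} - {Suc u}"
  proof
    show "inc u ` {0..<M} \<subseteq> {0..<Suc M} - {Suc u}" using inc_ne_Suc by (auto simp: inc_def)
  next
    show "{0..<Suc M} - {Suc u} \<subseteq> inc u ` {0..<M}"
    proof
      fix y assume y: "y \<in> {0..<Suc M} - {Suc u}"
      show "y \<in> inc u ` {0..<M}"
      proof (cases "y \<le> u")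
        case True then show ?thesis using assms(2) by (intro image_eqI[of _ _ y]) (auto simp: inc_def)
      next
        case False then show ?thesis using y by (intro image_eqI[of _ _ "y - 1"]) (auto simp: inc_def)
      qed
    qed
  qed
  have "inc u ` set L' = inc u ` {0..<M}" using id sZ img by (metis set_map)
  then have sL': "set L' = {0..<M}" using inc_inj by (simp add: inj_image_eq_iff)
  have "u \<notin> set xs" using dL unfolding L by auto
  then have "um u L' = L" unfolding um_def id Z_def L by (simp add: ib_split)
  then show ?thesis using dL' sL' by (auto simp: P_mem)
qed

lemma merge_sum:
  fixes F :: "nat list \<Rightarrow> real"
  assumes "u < M"
  shows "(\<Sum>L\<in>P (Suc M). of_bool (adj L (Suc u) u) * F L) = (\<Sum>L\<in>P M. F (um u L))"
proof -
  have "(\<Sum>L\<in>P (Suc M). of_bool (adj L (Suc u) u) * F L) = (\<Sum>L\<in>{L\<in>P (Suc M). adj L (Suc u) u}. F L)"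
    unfolding sum.inter_filter[OF finite_permutations_of_set] by (intro sum.cong) auto
  also have "{L\<in>P (Suc M). adj L (Suc u) u} = um u ` P M"
  proof (intro set_eqI iffI)
    fix L assume "L \<in> {L\<in>P (Suc M). adj L (Suc u) u}"
    then have h: "L \<in> P (Suc M)" "adj L (Suc u) u" by auto
    obtain L' where "L' \<in> P M" "um u L' = L" using um_surj[OF h(1) assms h(2)] by blast
    then show "L \<in> um u ` P M" by blast
  next
    fix L assume "L \<in> um u ` P M"
    then show "L \<in> {L\<in>P (Suc M). adj L (Suc u) u}" using um_P[OF _ assms] um_adj[OF _ assms] by blast
  qed
  also have "(\<Sum>L\<in>um u ` P M. F L) = (\<Sum>L\<in>P M. F (um u L))"
    by (rule sum.reindex_cong[where l="um u"]) (auto intro: inj_onI um_inj[OF _ _ assms])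
  finally show ?thesis .
qed

lemma prec_del: "x \<noteq> c \<Longrightarrow> y \<noteq> c \<Longrightarrow> prec (A @ c # B) x y \<longleftrightarrow> prec (A @ B) x y"
  by (auto simp: prec_append)

lemma prec_adj_same:
  assumes "distinct (A @ c # d # B)" "v \<noteq> c" "v \<noteq> d"
  shows "prec (A @ c # d # B) v c \<longleftrightarrow> prec (A @ c # d # B) v d"
  using assms by (auto simp: prec_append dest: prec_set)

lemma um_prec_inc:
  assumes "L \<in> P M" "u < M"
  shows "prec (um u L) (inc u a) (inc u b) \<longleftrightarrow> prec L a b"
proof -
  obtain xs ys where L: "L = xs @ u # ys" and U: "um u L = map (inc u) xs @ Suc u # u # map (inc u) ys"
    using um_split[OF assms] by blast
  have iu: "inc u u = u" by (simp add: inc_def)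
  have "prec (um u L) (inc u a) (inc u b) \<longleftrightarrow> prec (map (inc u) xs @ u # map (inc u) ys) (inc u a) (inc u b)"
    unfolding U by (rule prec_del) (rule inc_ne_Suc)+
  also have "map (inc u) xs @ u # map (inc u) ys = map (inc u) L" unfolding L using iu by simp
  also have "prec (map (inc u) L) (inc u a) (inc u b) \<longleftrightarrow> prec L a b" by (rule prec_map[OF inc_inj])
  finally show ?thesis .
qed

lemma um_prec_Suc:
  assumes "L \<in> P M" "u < M" "v \<noteq> u" "v \<noteq> Suc u"
  shows "prec (um u L) v (Suc u) \<longleftrightarrow> prec (um u L) v u"
proof -
  obtain xs ys where U: "um u L = map (inc u) xs @ Suc u # u # map (inc u) ys"
    using um_split[OF assms(1,2)] by blast
  have "distinct (um u L)" using um_P[OF assms(1,2)] by (simp add: P_mem)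
  then show ?thesis unfolding U by (rule prec_adj_same[OF _ assms(4) assms(3)])
qed

abbreviation Y :: "nat \<Rightarrow> nat list \<Rightarrow> bool" where
  "Y j L \<equiv> prec L (Suc j) j"

lemma um_Y_low:
  assumes "L \<in> P M" "u < M" "Suc j < u"
  shows "Y j (um u L) \<longleftrightarrow> Y j L"
  using um_prec_inc[OF assms(1,2), of "Suc j" j] assms(3) by (simp add: inc_def)

lemma um_Y_high:
  assumes "L \<in> P M" "u < M" "Suc (Suc u) \<le> j"
  shows "Y j (um u L) \<longleftrightarrow> Y (j - 1) L"
proof -
  have "inc u j = Suc j" "inc u (j - 1) = j" using assms(3) by (auto simp: inc_def)
  then show ?thesis using um_prec_inc[OF assms(1,2), of j "j - 1"] assms(3) by simp
qed

lemma um_Y_up: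
  assumes "L \<in> P M" "u < M"
  shows "Y (Suc u) (um u L) \<longleftrightarrow> Y u L"
proof -
  have "Y (Suc u) (um u L) \<longleftrightarrow> prec (um u L) (Suc (Suc u)) u"
    by (rule um_prec_Suc[OF assms]) auto
  also have "\<dots> \<longleftrightarrow> prec (um u L) (inc u (Suc u)) (inc u u)" by (simp add: inc_def)
  also have "\<dots> \<longleftrightarrow> Y u L" by (rule um_prec_inc[OF assms])
  finally show ?thesis .
qed

lemma um_Y_down:
  assumes "L \<in> P M" "u < M" "Suc j = u"
  shows "Y j (um u L) \<longleftrightarrow> Y j L"
  using um_prec_inc[OF assms(1,2), of "Suc j" j] assms(3) by (simp add: inc_def)


lemma P_facts: "L \<in> P N \<Longrightarrow> distinct L \<and> set L = {0..<N}"
  by (simp add: P_mem)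

lemma prec_not_iff:
  assumes "L \<in> P N" "a < N" "b < N" "a \<noteq> b"
  shows "prec L a b \<longleftrightarrow> \<not> prec L b a"
  using assms prec_total[of a L b] prec_asym[of L a b] by (auto simp: P_mem)

lemma Y_sw: "Suc m < N \<Longrightarrow> L \<in> P N \<Longrightarrow> Y m (sw m L) \<longleftrightarrow> \<not> Y m L"
  using prec_not_iff[of L N m "Suc m"] by (simp add: prec_sw)

lemma adj_asym: "distinct L \<Longrightarrow> adj L a b \<Longrightarrow> \<not> adj L b a"
  using adj_imp_prec prec_asym by blast

lemma pair_gen:
  fixes H :: "nat list \<Rightarrow> real" and \<phi> :: "nat \<Rightarrow> real"
  assumes N: "Suc m < N" and H: "\<forall>L\<in>P N. H (sw m L) = H L"
  shows "2 * (\<Sum>L\<in>P N. of_bool (Y m L) * H L * \<phi> (dl L))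
       = (\<Sum>L\<in>P N. H L * \<phi> (dl L))
         + (\<Sum>L\<in>P N. of_bool (adj L m (Suc m)) * H L * (\<phi> (dl L + 1) - \<phi> (dl L)))"
proof -
  define S where "S = (\<Sum>L\<in>P N. of_bool (Y m L) * H L * \<phi> (dl L))"
  have "S = (\<Sum>L\<in>P N. of_bool (Y m (sw m L)) * H (sw m L) * \<phi> (dl (sw m L)))"
    unfolding S_def by (rule sum_sw[OF N])
  also have "\<dots> = (\<Sum>L\<in>P N. of_bool (\<not> Y m L) * H L * \<phi> (dl L)
      + of_bool (adj L m (Suc m)) * H L * (\<phi> (dl L + 1) - \<phi> (dl L)))"
  proof (intro sum.cong refl)
    fix L assume L: "L \<in> P N"
    have d: "distinct L" using L by (simp add: P_mem)
    have ys: "Y m (sw m L) \<longleftrightarrow> \<not> Y m L" by (rule Y_sw[OF N L])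
    have ds: "dl (sw m L) + (if adj L (Suc m) m then 1 else 0) = dl L + (if adj L m (Suc m) then 1 else 0)"
      by (rule dl_sw[OF d])
    show "of_bool (Y m (sw m L)) * H (sw m L) * \<phi> (dl (sw m L)) =
      of_bool (\<not> Y m L) * H L * \<phi> (dl L) + of_bool (adj L m (Suc m)) * H L * (\<phi> (dl L + 1) - \<phi> (dl L))"
    proof (cases "Y m L")
      case True
      then have "\<not> adj L m (Suc m)" using prec_asym[OF d] adj_imp_prec by blast
      then show ?thesis using True ys by simp
    next
      case False
      then have "\<not> adj L (Suc m) m" using adj_imp_prec by blast
      then have "dl (sw m L) = dl L + (if adj L m (Suc m) then 1 else 0)" using ds by simp
      then show ?thesis using False ys H L by (auto simp: algebra_simps)
    qed
  qed
  also have "\<dots> = (\<Sum>L\<in>P N. of_bool (\<not> Y m L) * H L * \<phi> (dl L))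
      + (\<Sum>L\<in>P N. of_bool (adj L m (Suc m)) * H L * (\<phi> (dl L + 1) - \<phi> (dl L)))"
    by (rule sum.distrib)
  finally have 1: "S = \<dots>" .
  have 2: "(\<Sum>L\<in>P N. H L * \<phi> (dl L)) = S + (\<Sum>L\<in>P N. of_bool (\<not> Y m L) * H L * \<phi> (dl L))"
    unfolding S_def sum.distrib[symmetric] by (intro sum.cong) auto
  show ?thesis using 1 2 unfolding S_def by linarith
qed

lemma asc_desc:
  fixes H :: "nat list \<Rightarrow> real" and \<psi> :: "nat \<Rightarrow> real"
  assumes N: "Suc m < N" and H: "\<forall>L\<in>P N. adj L (Suc m) m \<longrightarrow> H (sw m L) = H L"
  shows "(\<Sum>L\<in>P N. of_bool (adj L m (Suc m)) * H L * \<psi> (dl L))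
       = (\<Sum>L\<in>P N. of_bool (adj L (Suc m) m) * H L * \<psi> (dl L - 1))"
proof -
  have "(\<Sum>L\<in>P N. of_bool (adj L m (Suc m)) * H L * \<psi> (dl L))
      = (\<Sum>L\<in>P N. of_bool (adj (sw m L) m (Suc m)) * H (sw m L) * \<psi> (dl (sw m L)))"
    by (rule sum_sw[OF N])
  also have "\<dots> = (\<Sum>L\<in>P N. of_bool (adj L (Suc m) m) * H L * \<psi> (dl L - 1))"
  proof (intro sum.cong refl)
    fix L assume L: "L \<in> P N"
    have d: "distinct L" using L by (simp add: P_mem)
    have as: "adj (sw m L) m (Suc m) \<longleftrightarrow> adj L (Suc m) m" by (simp add: adj_sw)
    show "of_bool (adj (sw m L) m (Suc m)) * H (sw m L) * \<psi> (dl (sw m L)) =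
          of_bool (adj L (Suc m) m) * H L * \<psi> (dl L - 1)"
    proof (cases "adj L (Suc m) m")
      case True
      then have "\<not> adj L m (Suc m)" using adj_asym[OF d] by blast
      then have "dl (sw m L) = dl L - 1" using dl_sw[OF d, of m] True by simp
      then show ?thesis using True as H L by simp
    qed (use as in simp)
  qed
  finally show ?thesis .
qed

lemma alpha_gen:
  fixes H :: "nat list \<Rightarrow> real" and \<phi> :: "nat \<Rightarrow> real"
  assumes m: "m < M" and H: "\<forall>L\<in>P (Suc M). H (sw m L) = H L"
  shows "2 * (\<Sum>L\<in>P (Suc M). of_bool (Y m L) * H L * \<phi> (dl L))
       = (\<Sum>L\<in>P (Suc M). H L * \<phi> (dl L))
         + (\<Sum>L\<in>P M. H (um m L) * (\<phi> (dl L + 1) - \<phi> (dl L)))"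
proof -
  have N: "Suc m < Suc M" using m by simp
  have "(\<Sum>L\<in>P (Suc M). of_bool (adj L m (Suc m)) * H L * (\<phi> (dl L + 1) - \<phi> (dl L)))
      = (\<Sum>L\<in>P (Suc M). of_bool (adj L (Suc m) m) * H L * (\<phi> (dl L - 1 + 1) - \<phi> (dl L - 1)))"
    using asc_desc[OF N, of H "\<lambda>d. \<phi> (d + 1) - \<phi> d"] H by simp
  also have "\<dots> = (\<Sum>L\<in>P (Suc M). of_bool (adj L (Suc m) m) * (H L * (\<phi> (dl L - 1 + 1) - \<phi> (dl L - 1))))"
    by (simp add: mult.assoc)
  also have "\<dots> = (\<Sum>L\<in>P M. H (um m L) * (\<phi> (dl (um m L) - 1 + 1) - \<phi> (dl (um m L) - 1)))"
    by (rule merge_sum[OF m])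
  also have "\<dots> = (\<Sum>L\<in>P M. H (um m L) * (\<phi> (dl L + 1) - \<phi> (dl L)))"
    by (intro sum.cong refl) (simp add: um_dl[OF _ m])
  finally show ?thesis using pair_gen[OF N, of H \<phi>] H by simp
qed

definition YS :: "nat \<Rightarrow> nat \<Rightarrow> (nat \<Rightarrow> real) \<Rightarrow> real" where
  "YS N m \<phi> = (\<Sum>L\<in>P N. of_bool (Y m L) * \<phi> (dl L))"

lemma alpha:
  assumes m: "m < M"
  shows "2 * YS (Suc M) m \<phi> = Q (Suc M) \<phi> + Q M (\<lambda>d. \<phi> (d + 1) - \<phi> d)"
  using alpha_gen[OF m, of "\<lambda>_. 1" \<phi>] unfolding YS_def Q_def by simp

lemma tau_fix: "x \<noteq> m \<Longrightarrow> x \<noteq> Suc m \<Longrightarrow> tau m x = x"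
  by (simp add: Transposition.transpose_def)

lemma beta:
  assumes m: "m < Suc M" and j: "j < Suc M" and far: "Suc j < m \<or> Suc (Suc m) \<le> j"
  shows "4 * (\<Sum>L\<in>P (Suc (Suc M)). of_bool (Y m L) * of_bool (Y j L) * \<phi> (dl L))
    = Q (Suc (Suc M)) \<phi> + 2 * Q (Suc M) (\<lambda>d. \<phi> (d + 1) - \<phi> d)
      + Q M (\<lambda>d. (\<phi> (d + 2) - \<phi> (d + 1)) - (\<phi> (d + 1) - \<phi> d))"
proof -
  define j' where "j' = (if Suc j < m then j else j - 1)"
  have j': "j' < M" using far m j unfolding j'_def by auto
  have H: "\<forall>L\<in>P (Suc (Suc M)). of_bool (Y j (sw m L)) = (of_bool (Y j L) :: real)"
    using far by (auto simp: prec_sw tau_fix)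
  have um: "Y j (um m L) \<longleftrightarrow> Y j' L" if "L \<in> P (Suc M)" for L
    using far um_Y_low[OF that m, of j] um_Y_high[OF that m, of j] unfolding j'_def by auto
  have A: "2 * (\<Sum>L\<in>P (Suc (Suc M)). of_bool (Y m L) * of_bool (Y j L) * \<phi> (dl L))
      = (\<Sum>L\<in>P (Suc (Suc M)). of_bool (Y j L) * \<phi> (dl L))
        + (\<Sum>L\<in>P (Suc M). of_bool (Y j (um m L)) * (\<phi> (dl L + 1) - \<phi> (dl L)))"
    by (rule alpha_gen[OF m H])
  have B: "(\<Sum>L\<in>P (Suc M). of_bool (Y j (um m L)) * (\<phi> (dl L + 1) - \<phi> (dl L)))
      = YS (Suc M) j' (\<lambda>d. \<phi> (d + 1) - \<phi> d)"
    unfolding YS_def using um by (intro sum.cong) auto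
  have 1: "2 * (\<Sum>L\<in>P (Suc (Suc M)). of_bool (Y m L) * of_bool (Y j L) * \<phi> (dl L))
      = YS (Suc (Suc M)) j \<phi> + YS (Suc M) j' (\<lambda>d. \<phi> (d + 1) - \<phi> d)"
    using A B unfolding YS_def by simp
  have 2: "2 * YS (Suc (Suc M)) j \<phi> = Q (Suc (Suc M)) \<phi> + Q (Suc M) (\<lambda>d. \<phi> (d + 1) - \<phi> d)"
    by (rule alpha) (use j in simp)
  have 3: "2 * YS (Suc M) j' (\<lambda>d. \<phi> (d + 1) - \<phi> d) = Q (Suc M) (\<lambda>d. \<phi> (d + 1) - \<phi> d)
      + Q M (\<lambda>d. (\<phi> (d + 1 + 1) - \<phi> (d + 1)) - (\<phi> (d + 1) - \<phi> d))"
    by (rule alpha[OF j'])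
  show ?thesis using 1 2 3 by (simp add: numeral_2_eq_2 add.assoc)
qed

lemma prec_adj_same2:
  assumes "distinct (A @ c # d # B)" "v \<noteq> c" "v \<noteq> d"
  shows "prec (A @ c # d # B) c v \<longleftrightarrow> prec (A @ c # d # B) d v"
  using assms by (auto simp: prec_append dest: prec_set)

lemma um_prec_Suc2:
  assumes "L \<in> P M" "u < M" "v \<noteq> u" "v \<noteq> Suc u"
  shows "prec (um u L) (Suc u) v \<longleftrightarrow> prec (um u L) u v"
proof -
  obtain xs ys where U: "um u L = map (inc u) xs @ Suc u # u # map (inc u) ys"
    using um_split[OF assms(1,2)] by blast
  have "distinct (um u L)" using um_P[OF assms(1,2)] by (simp add: P_mem)
  then show ?thesis unfolding U by (rule prec_adj_same2[OF _ assms(4) assms(3)])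
qed


lemma gamma:
  fixes g :: "nat \<Rightarrow> real"
  assumes m: "Suc m < M"
  shows "3 * (\<Sum>L\<in>P (Suc M). of_bool (Y m L) * of_bool (Y (Suc m) L) * g (dl L))
    = YS (Suc M) m g + 2 * YS M m (\<lambda>d. g (d + 1) - g d)"
proof -
  have N1: "Suc m < Suc M" and N2: "Suc (Suc m) < Suc M" and m0: "m < M" using m by auto
  define T where "T f = (\<Sum>L\<in>P (Suc M). of_bool (f L) * g (dl L))" for f :: "nat list \<Rightarrow> bool"
  define R where "R = YS M m (\<lambda>d. g (d + 1) - g d)"
  have mem: "distinct L \<and> m \<in> set L \<and> Suc m \<in> set L \<and> Suc (Suc m) \<in> set L" if "L \<in> P (Suc M)" for L
    using that N2 by (auto simp: P_mem)
  have t1: "tau (Suc m) (Suc (Suc m)) = Suc m" "tau (Suc m) (Suc m) = Suc (Suc m)" "tau (Suc m) m = m"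
    "tau m (Suc (Suc m)) = Suc (Suc m)" "tau m m = Suc m" "tau m (Suc m) = m"
    by (simp_all add: tau_fix)
  have s1: "T (\<lambda>L. prec L (Suc (Suc m)) (Suc m) \<and> prec L (Suc m) m)
     = (\<Sum>L\<in>P (Suc M). of_bool (prec L (Suc m) (Suc (Suc m)) \<and> prec L (Suc (Suc m)) m)
          * g (dl L + (if adj L (Suc m) (Suc (Suc m)) then 1 else 0)))"
    unfolding T_def
  proof (subst sum_sw[OF N2], intro sum.cong refl)
    fix L assume L: "L \<in> P (Suc M)"
    have d: "distinct L" using mem[OF L] by blast
    have ds: "dl (sw (Suc m) L) + (if adj L (Suc (Suc m)) (Suc m) then 1 else 0)
        = dl L + (if adj L (Suc m) (Suc (Suc m)) then 1 else 0)" by (rule dl_sw[OF d])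
    show "of_bool (prec (sw (Suc m) L) (Suc (Suc m)) (Suc m) \<and> prec (sw (Suc m) L) (Suc m) m) * g (dl (sw (Suc m) L))
      = of_bool (prec L (Suc m) (Suc (Suc m)) \<and> prec L (Suc (Suc m)) m)
          * g (dl L + (if adj L (Suc m) (Suc (Suc m)) then 1 else 0))"
    proof (cases "prec L (Suc m) (Suc (Suc m))")
      case True
      then have "\<not> adj L (Suc (Suc m)) (Suc m)" using prec_asym[OF d] adj_imp_prec by blast
      then show ?thesis using ds by (simp add: prec_sw t1)
    qed (simp add: prec_sw t1)
  qed
  have s2: "(\<Sum>L\<in>P (Suc M). of_bool (prec L (Suc m) (Suc (Suc m)) \<and> prec L (Suc (Suc m)) m)
          * g (dl L + (if adj L (Suc m) (Suc (Suc m)) then 1 else 0)))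
     = T (\<lambda>L. prec L (Suc m) (Suc (Suc m)) \<and> prec L (Suc (Suc m)) m)
       + (\<Sum>L\<in>P (Suc M). of_bool (adj L (Suc m) (Suc (Suc m))) * of_bool (prec L (Suc (Suc m)) m)
            * (g (dl L + 1) - g (dl L)))"
    unfolding T_def sum.distrib[symmetric]
  proof (intro sum.cong refl)
    fix L assume L: "L \<in> P (Suc M)"
    show "of_bool (prec L (Suc m) (Suc (Suc m)) \<and> prec L (Suc (Suc m)) m) *
          g (dl L + (if adj L (Suc m) (Suc (Suc m)) then 1 else 0)) =
          of_bool (prec L (Suc m) (Suc (Suc m)) \<and> prec L (Suc (Suc m)) m) * g (dl L) +
          of_bool (adj L (Suc m) (Suc (Suc m))) * of_bool (prec L (Suc (Suc m)) m) * (g (dl L + 1) - g (dl L))"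
    proof (cases "adj L (Suc m) (Suc (Suc m))")
      case True
      then have "prec L (Suc m) (Suc (Suc m))" by (rule adj_imp_prec)
      then show ?thesis using True by (simp add: algebra_simps)
    qed simp
  qed
  have s3: "(\<Sum>L\<in>P (Suc M). of_bool (adj L (Suc m) (Suc (Suc m))) * of_bool (prec L (Suc (Suc m)) m)
            * (g (dl L + 1) - g (dl L)))
      = (\<Sum>L\<in>P (Suc M). of_bool (adj L (Suc (Suc m)) (Suc m)) * of_bool (prec L (Suc (Suc m)) m)
            * (g (dl L - 1 + 1) - g (dl L - 1)))"
  proof (rule asc_desc[OF N2, of "\<lambda>L. of_bool (prec L (Suc (Suc m)) m)" "\<lambda>d. g (d + 1) - g d"], intro ballI impI)
    fix L assume L: "L \<in> P (Suc M)" and a: "adj L (Suc (Suc m)) (Suc m)"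
    have d: "distinct L" using mem[OF L] by blast
    have "prec L (Suc m) m \<longleftrightarrow> prec L (Suc (Suc m)) m"
    proof
      assume "prec L (Suc m) m"
      then show "prec L (Suc (Suc m)) m" using prec_trans[OF d adj_imp_prec[OF a]] by blast
    next
      assume "prec L (Suc (Suc m)) m"
      then show "prec L (Suc m) m" using adj_prec_after[OF d a] by simp
    qed
    then show "of_bool (prec (sw (Suc m) L) (Suc (Suc m)) m) = (of_bool (prec L (Suc (Suc m)) m) :: real)"
      by (simp add: prec_sw t1)
  qed
  have s4: "(\<Sum>L\<in>P (Suc M). of_bool (adj L (Suc (Suc m)) (Suc m)) * of_bool (prec L (Suc (Suc m)) m)
            * (g (dl L - 1 + 1) - g (dl L - 1))) = R"
  proof -
    have "(\<Sum>L\<in>P (Suc M). of_bool (adj L (Suc (Suc m)) (Suc m)) * of_bool (prec L (Suc (Suc m)) m)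
            * (g (dl L - 1 + 1) - g (dl L - 1)))
       = (\<Sum>L\<in>P (Suc M). of_bool (adj L (Suc (Suc m)) (Suc m)) * (of_bool (prec L (Suc (Suc m)) m)
            * (g (dl L - 1 + 1) - g (dl L - 1))))" by (simp add: mult.assoc)
    also have "\<dots> = (\<Sum>L\<in>P M. of_bool (prec (um (Suc m) L) (Suc (Suc m)) m)
            * (g (dl (um (Suc m) L) - 1 + 1) - g (dl (um (Suc m) L) - 1)))"
      by (rule merge_sum[OF m])
    also have "\<dots> = R" unfolding R_def YS_def
    proof (intro sum.cong refl)
      fix L assume L: "L \<in> P M"
      have "prec (um (Suc m) L) (Suc (Suc m)) m \<longleftrightarrow> prec (um (Suc m) L) (Suc m) m"
        by (rule um_prec_Suc2[OF L m]) auto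
      also have "\<dots> \<longleftrightarrow> Y m L" by (rule um_Y_down[OF L m]) simp
      finally show "of_bool (prec (um (Suc m) L) (Suc (Suc m)) m)
            * (g (dl (um (Suc m) L) - 1 + 1) - g (dl (um (Suc m) L) - 1))
          = of_bool (Y m L) * (g (dl L + 1) - g (dl L))"
        by (simp add: um_dl[OF L m])
    qed
    finally show ?thesis .
  qed
  have S1: "T (\<lambda>L. prec L (Suc (Suc m)) (Suc m) \<and> prec L (Suc m) m)
      = T (\<lambda>L. prec L (Suc m) (Suc (Suc m)) \<and> prec L (Suc (Suc m)) m) + R"
    using s1 s2 s3 s4 by simp
  have u1: "T (\<lambda>L. prec L (Suc (Suc m)) m \<and> prec L m (Suc m))
     = (\<Sum>L\<in>P (Suc M). of_bool (prec L (Suc (Suc m)) (Suc m) \<and> prec L (Suc m) m)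
          * g (dl L - (if adj L (Suc m) m then 1 else 0)))"
    unfolding T_def
  proof (subst sum_sw[OF N1], intro sum.cong refl)
    fix L assume L: "L \<in> P (Suc M)"
    have d: "distinct L" using mem[OF L] by blast
    have ds: "dl (sw m L) + (if adj L (Suc m) m then 1 else 0)
        = dl L + (if adj L m (Suc m) then 1 else 0)" by (rule dl_sw[OF d])
    show "of_bool (prec (sw m L) (Suc (Suc m)) m \<and> prec (sw m L) m (Suc m)) * g (dl (sw m L))
      = of_bool (prec L (Suc (Suc m)) (Suc m) \<and> prec L (Suc m) m)
          * g (dl L - (if adj L (Suc m) m then 1 else 0))"
    proof (cases "prec L (Suc m) m")
      case True
      then have "\<not> adj L m (Suc m)" using prec_asym[OF d] adj_imp_prec by blast
      then have "dl (sw m L) = dl L - (if adj L (Suc m) m then 1 else 0)" using ds by auto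
      then show ?thesis by (simp add: prec_sw t1)
    qed (simp add: prec_sw t1)
  qed
  have u2: "(\<Sum>L\<in>P (Suc M). of_bool (prec L (Suc (Suc m)) (Suc m) \<and> prec L (Suc m) m)
          * g (dl L - (if adj L (Suc m) m then 1 else 0)))
     = T (\<lambda>L. prec L (Suc (Suc m)) (Suc m) \<and> prec L (Suc m) m)
       - (\<Sum>L\<in>P (Suc M). of_bool (adj L (Suc m) m) * (of_bool (prec L (Suc (Suc m)) (Suc m))
            * (g (dl L) - g (dl L - 1))))"
    unfolding T_def sum_subtractf[symmetric]
  proof (intro sum.cong refl)
    fix L assume L: "L \<in> P (Suc M)"
    show "of_bool (prec L (Suc (Suc m)) (Suc m) \<and> prec L (Suc m) m) *
          g (dl L - (if adj L (Suc m) m then 1 else 0)) =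
          of_bool (prec L (Suc (Suc m)) (Suc m) \<and> prec L (Suc m) m) * g (dl L) -
          of_bool (adj L (Suc m) m) * (of_bool (prec L (Suc (Suc m)) (Suc m)) * (g (dl L) - g (dl L - 1)))"
    proof (cases "adj L (Suc m) m")
      case True
      then have "prec L (Suc m) m" by (rule adj_imp_prec)
      then show ?thesis using True by (simp add: algebra_simps)
    qed simp
  qed
  have u3: "(\<Sum>L\<in>P (Suc M). of_bool (adj L (Suc m) m) * (of_bool (prec L (Suc (Suc m)) (Suc m))
            * (g (dl L) - g (dl L - 1)))) = R"
  proof -
    have "(\<Sum>L\<in>P (Suc M). of_bool (adj L (Suc m) m) * (of_bool (prec L (Suc (Suc m)) (Suc m))
            * (g (dl L) - g (dl L - 1))))
       = (\<Sum>L\<in>P M. of_bool (prec (um m L) (Suc (Suc m)) (Suc m))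
            * (g (dl (um m L)) - g (dl (um m L) - 1)))"
      by (rule merge_sum[OF m0])
    also have "\<dots> = R" unfolding R_def YS_def
    proof (intro sum.cong refl)
      fix L assume L: "L \<in> P M"
      have "Y (Suc m) (um m L) \<longleftrightarrow> Y m L" by (rule um_Y_up[OF L m0])
      then show "of_bool (prec (um m L) (Suc (Suc m)) (Suc m)) * (g (dl (um m L)) - g (dl (um m L) - 1))
          = of_bool (Y m L) * (g (dl L + 1) - g (dl L))"
        by (simp add: um_dl[OF L m0])
    qed
    finally show ?thesis .
  qed
  have S2: "T (\<lambda>L. prec L (Suc (Suc m)) m \<and> prec L m (Suc m))
      = T (\<lambda>L. prec L (Suc (Suc m)) (Suc m) \<and> prec L (Suc m) m) - R"
    using u1 u2 u3 by simp
  have S3: "T (\<lambda>L. prec L (Suc m) m \<and> prec L m (Suc (Suc m)))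
      = T (\<lambda>L. prec L (Suc (Suc m)) m \<and> prec L m (Suc m))"
    unfolding T_def
  proof (subst sum_sw[OF N2], intro sum.cong refl)
    fix L assume L: "L \<in> P (Suc M)"
    have d: "distinct L" using mem[OF L] by blast
    have ds: "dl (sw (Suc m) L) + (if adj L (Suc (Suc m)) (Suc m) then 1 else 0)
        = dl L + (if adj L (Suc m) (Suc (Suc m)) then 1 else 0)" by (rule dl_sw[OF d])
    show "of_bool (prec (sw (Suc m) L) (Suc m) m \<and> prec (sw (Suc m) L) m (Suc (Suc m))) * g (dl (sw (Suc m) L))
      = of_bool (prec L (Suc (Suc m)) m \<and> prec L m (Suc m)) * g (dl L)"
    proof (cases "prec L (Suc (Suc m)) m \<and> prec L m (Suc m)")
      case True
      then have "prec L (Suc (Suc m)) (Suc m)" using prec_trans[OF d] by blast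
      then have n1: "\<not> adj L (Suc m) (Suc (Suc m))" using prec_asym[OF d] adj_imp_prec by blast
      have n2: "\<not> adj L (Suc (Suc m)) (Suc m)"
      proof
        assume a: "adj L (Suc (Suc m)) (Suc m)"
        have "prec L (Suc m) m" using adj_prec_after[OF d a] True by simp
        then show False using True prec_asym[OF d] by blast
      qed
      have "dl (sw (Suc m) L) = dl L" using ds n1 n2 by simp
      then show ?thesis using True by (simp add: prec_sw t1)
    qed (simp add: prec_sw t1)
  qed
  have S4: "YS (Suc M) m g = T (\<lambda>L. prec L (Suc m) (Suc (Suc m)) \<and> prec L (Suc (Suc m)) m)
      + T (\<lambda>L. prec L (Suc m) m \<and> prec L m (Suc (Suc m)))
      + T (\<lambda>L. prec L (Suc (Suc m)) (Suc m) \<and> prec L (Suc m) m)"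
    unfolding T_def YS_def sum.distrib[symmetric]
  proof (intro sum.cong refl)
    fix L assume L: "L \<in> P (Suc M)"
    have d: "distinct L" and i: "m \<in> set L" "Suc m \<in> set L" "Suc (Suc m) \<in> set L" using mem[OF L] by auto
    have tot: "prec L x y \<or> prec L y x" if "x \<in> set L" "y \<in> set L" "x \<noteq> y" for x y
      using prec_total that by blast
    have as: "\<not> prec L y x" if "prec L x y" for x y using prec_asym[OF d that] .
    have tr: "prec L x z" if "prec L x y" "prec L y z" for x y z using prec_trans[OF d that] .
    have "of_bool (prec L (Suc m) m) =
      (of_bool (prec L (Suc m) (Suc (Suc m)) \<and> prec L (Suc (Suc m)) m)
      + of_bool (prec L (Suc m) m \<and> prec L m (Suc (Suc m)))
      + of_bool (prec L (Suc (Suc m)) (Suc m) \<and> prec L (Suc m) m) :: real)"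
    proof (cases "prec L (Suc m) m")
      case False
      have "\<not> (prec L (Suc m) (Suc (Suc m)) \<and> prec L (Suc (Suc m)) m)"
        using False tr by blast
      then show ?thesis using False by simp
    next
      case True
      show ?thesis
      proof (cases "prec L (Suc (Suc m)) (Suc m)")
        case True2: True
        have "\<not> prec L (Suc m) (Suc (Suc m))" using as True2 by blast
        moreover have "\<not> prec L m (Suc (Suc m))" using as tr True2 True by blast
        ultimately show ?thesis using True True2 by simp
      next
        case False2: False
        then have ab: "prec L (Suc m) (Suc (Suc m))" using tot[OF i(2) i(3)] by auto
        show ?thesis
        proof (cases "prec L (Suc (Suc m)) m")
          case True3: True
          then have "\<not> prec L m (Suc (Suc m))" using as by blast
          then show ?thesis using True False2 True3 ab by simp
        next
          case False3: False
          then have "prec L m (Suc (Suc m))" using tot[OF i(1) i(3)] by auto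
          then show ?thesis using True False2 False3 ab by simp
        qed
      qed
    qed
    then show "of_bool (Y m L) * g (dl L) =
      of_bool (prec L (Suc m) (Suc (Suc m)) \<and> prec L (Suc (Suc m)) m) * g (dl L) +
      of_bool (prec L (Suc m) m \<and> prec L m (Suc (Suc m))) * g (dl L) +
      of_bool (prec L (Suc (Suc m)) (Suc m) \<and> prec L (Suc m) m) * g (dl L)"
      by (simp add: algebra_simps)
  qed
  have X: "(\<Sum>L\<in>P (Suc M). of_bool (Y m L) * of_bool (Y (Suc m) L) * g (dl L))
      = T (\<lambda>L. prec L (Suc (Suc m)) (Suc m) \<and> prec L (Suc m) m)"
    unfolding T_def by (intro sum.cong refl) auto
  show ?thesis unfolding X R_def[symmetric] using S1 S2 S3 S4 by linarith
qed


definition il :: "nat list \<Rightarrow> nat" where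
  "il L = (\<Sum>j<length L - 1. of_bool (Y j L))"

lemma il_real: "L \<in> P (Suc M) \<Longrightarrow> real (il L) = (\<Sum>j<M. of_bool (Y j L))"
  by (simp add: il_def P_length)

definition D1 :: "(nat \<Rightarrow> real) \<Rightarrow> nat \<Rightarrow> real" where
  "D1 g d = g (d + 1) - g d"

definition D2 :: "(nat \<Rightarrow> real) \<Rightarrow> nat \<Rightarrow> real" where
  "D2 g d = g (d + 2) - 2 * g (d + 1) + g d"

lemma alpha': "m < M \<Longrightarrow> YS (Suc M) m g = (Q (Suc M) g + Q M (D1 g)) / 2"
  using alpha[of m M g] unfolding D1_def by simp

lemma S1:
  "(\<Sum>L\<in>P (Suc M). g (dl L) * real (il L)) = real M * (Q (Suc M) g + Q M (D1 g)) / 2"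
proof -
  have "(\<Sum>L\<in>P (Suc M). g (dl L) * real (il L)) = (\<Sum>L\<in>P (Suc M). \<Sum>j<M. of_bool (Y j L) * g (dl L))"
    by (intro sum.cong refl) (simp add: il_real sum_distrib_left mult.commute)
  also have "\<dots> = (\<Sum>j<M. YS (Suc M) j g)" unfolding YS_def by (rule sum.swap)
  also have "\<dots> = (\<Sum>j<M. (Q (Suc M) g + Q M (D1 g)) / 2)" by (intro sum.cong refl) (simp add: alpha')
  finally show ?thesis by simp
qed

lemma count_row:
  "1 \<le> M \<Longrightarrow> (\<Sum>j<M. if j = M then a else if j = Suc M \<or> M = Suc j then x else (b::real))
     = x + (real M - 1) * b"
proof (induction M rule: nat_induct_at_least)
  case base then show ?case by simp
next
  case (Suc M)
  have "(\<Sum>j<Suc M. if j = Suc M then a else if j = Suc (Suc M) \<or> Suc M = Suc j then x else b)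
     = (\<Sum>j<M. if j = Suc M then a else if j = Suc (Suc M) \<or> Suc M = Suc j then x else b) + x"
    by simp
  also have "(\<Sum>j<M. if j = Suc M then a else if j = Suc (Suc M) \<or> Suc M = Suc j then x else b) = (\<Sum>j<M. b)"
    by (intro sum.cong) auto
  finally show ?case by (simp add: algebra_simps)
qed

lemma count_row':
  "1 \<le> M \<Longrightarrow> (\<Sum>j<M. if M = j then a else if M = Suc j \<or> j = Suc M then x else (b::real))
     = x + (real M - 1) * b"
  using count_row[of M a x b] by (simp add: eq_commute disj_commute)

lemma count_sq:
  "1 \<le> M \<Longrightarrow> (\<Sum>j<M. \<Sum>k<M. if j = k then a else if j = Suc k \<or> k = Suc j then x else (b::real))
     = real M * a + 2 * (real M - 1) * x + (real M - 1) * (real M - 2) * b"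
proof (induction M rule: nat_induct_at_least)
  case base then show ?case by simp
next
  case (Suc M)
  let ?w = "\<lambda>j k. if j = k then a else if j = Suc k \<or> k = Suc j then x else b"
  have "(\<Sum>j<Suc M. \<Sum>k<Suc M. ?w j k) = (\<Sum>j<M. \<Sum>k<M. ?w j k) + (\<Sum>j<M. ?w j M) + (\<Sum>k<M. ?w M k) + a"
    by (simp add: sum.distrib)
  also have "(\<Sum>j<M. ?w j M) = x + (real M - 1) * b" using count_row[OF Suc(1)] by simp
  also have "(\<Sum>k<M. ?w M k) = x + (real M - 1) * b" using count_row'[OF Suc(1)] by simp
  finally show ?case using Suc(2) by (simp add: algebra_simps)
qed

lemma S2:
  assumes "1 \<le> M'"
  shows "(\<Sum>L\<in>P (Suc (Suc M')). g (dl L) * real (il L) ^ 2)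
    = real (Suc M') * ((Q (Suc (Suc M')) g + Q (Suc M') (D1 g)) / 2)
      + 2 * real M' * ((Q (Suc (Suc M')) g + 3 * Q (Suc M') (D1 g) + 2 * Q M' (D2 g)) / 6)
      + real M' * (real M' - 1) * ((Q (Suc (Suc M')) g + 2 * Q (Suc M') (D1 g) + Q M' (D2 g)) / 4)"
proof -
  let ?N = "Suc (Suc M')"
  define a where "a = (Q ?N g + Q (Suc M') (D1 g)) / 2"
  define x where "x = (Q ?N g + 3 * Q (Suc M') (D1 g) + 2 * Q M' (D2 g)) / 6"
  define b where "b = (Q ?N g + 2 * Q (Suc M') (D1 g) + Q M' (D2 g)) / 4"
  define W where "W j k = (\<Sum>L\<in>P ?N. of_bool (Y j L) * of_bool (Y k L) * g (dl L))" for j k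
  have D2': "(\<lambda>d. g (d + 1 + 1) - g (d + 1) - (g (d + 1) - g d)) = D2 g"
    "(\<lambda>d. g (d + 2) - g (d + 1) - (g (d + 1) - g d)) = D2 g"
    by (auto simp: D2_def fun_eq_iff numeral_2_eq_2)
  have D1': "(\<lambda>d. g (d + 1) - g d) = D1 g" by (simp add: D1_def fun_eq_iff)
  have Wgam: "W j (Suc j) = x" if "Suc j < Suc M'" for j
  proof -
    have "3 * W j (Suc j) = YS ?N j g + 2 * YS (Suc M') j (D1 g)"
      unfolding W_def using gamma[of j "Suc M'" g] that D1' by simp
    also have "YS ?N j g = a" unfolding a_def by (rule alpha') (use that in simp)
    also have "YS (Suc M') j (D1 g) = (Q (Suc M') (D1 g) + Q M' (D1 (D1 g))) / 2"
      by (rule alpha') (use that in simp)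
    also have "D1 (D1 g) = D2 g" by (auto simp: D1_def D2_def fun_eq_iff numeral_2_eq_2)
    finally have "3 * W j (Suc j) = a + 2 * ((Q (Suc M') (D1 g) + Q M' (D2 g)) / 2)" .
    then show ?thesis unfolding a_def x_def by (simp add: field_simps)
  qed
  have W: "W j k = (if j = k then a else if j = Suc k \<or> k = Suc j then x else b)"
    if "j < Suc M'" "k < Suc M'" for j k
  proof -
    consider "j = k" | "k = Suc j" | "j = Suc k" | "Suc j < k \<or> Suc k < j" by linarith
    then show ?thesis
    proof cases
      case 1
      then have "W j k = YS ?N j g" unfolding W_def YS_def by (intro sum.cong) auto
      also have "\<dots> = a" unfolding a_def by (rule alpha') (use that in simp)
      finally show ?thesis using 1 by simp
    next
      case 2 then show ?thesis using Wgam[of j] that by simp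
    next
      case 3
      have "W j k = W k j" unfolding W_def by (intro sum.cong) auto
      then show ?thesis using 3 Wgam[of k] that by simp
    next
      case 4
      have "4 * W j k = Q ?N g + 2 * Q (Suc M') (D1 g) + Q M' (D2 g)"
        using beta[of j M' k g] that 4 D1' D2' unfolding W_def by (auto simp: mult.commute)
      then show ?thesis using 4 unfolding b_def by auto
    qed
  qed
  have "(\<Sum>L\<in>P ?N. g (dl L) * real (il L) ^ 2) = (\<Sum>L\<in>P ?N. \<Sum>j<Suc M'. \<Sum>k<Suc M'. of_bool (Y j L) * of_bool (Y k L) * g (dl L))"
  proof (intro sum.cong refl)
    fix L assume L: "L \<in> P ?N"
    have "g (dl L) * real (il L) ^ 2 = g (dl L) * ((\<Sum>j<Suc M'. of_bool (Y j L)) * (\<Sum>k<Suc M'. of_bool (Y k L)))"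
      by (simp only: il_real[OF L] power2_eq_square)
    also have "\<dots> = g (dl L) * (\<Sum>j<Suc M'. \<Sum>k<Suc M'. of_bool (Y j L) * of_bool (Y k L))"
      by (subst sum_product) (rule refl)
    also have "\<dots> = (\<Sum>j<Suc M'. \<Sum>k<Suc M'. g (dl L) * (of_bool (Y j L) * of_bool (Y k L)))"
      by (simp only: sum_distrib_left)
    also have "\<dots> = (\<Sum>j<Suc M'. \<Sum>k<Suc M'. of_bool (Y j L) * of_bool (Y k L) * g (dl L))"
      by (simp only: mult.commute)
    finally show "g (dl L) * real (il L) ^ 2 = (\<Sum>j<Suc M'. \<Sum>k<Suc M'. of_bool (Y j L) * of_bool (Y k L) * g (dl L))" .
  qed
  also have "\<dots> = (\<Sum>j<Suc M'. \<Sum>k<Suc M'. W j k)" unfolding W_def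
    by (subst sum.swap) (simp add: sum.swap[of _ "P ?N"])
  also have "\<dots> = (\<Sum>j<Suc M'. \<Sum>k<Suc M'. if j = k then a else if j = Suc k \<or> k = Suc j then x else b)"
    by (intro sum.cong refl) (simp add: W)
  also have "\<dots> = real (Suc M') * a + 2 * (real (Suc M') - 1) * x + (real (Suc M') - 1) * (real (Suc M') - 2) * b"
    by (rule count_sq) simp
  finally show ?thesis unfolding a_def x_def b_def by (simp add: algebra_simps)
qed


declare upt_Suc [simp del]

fun invl :: "nat list \<Rightarrow> nat" where
  "invl [] = 0"
| "invl (x # xs) = length (filter (\<lambda>y. y < x) xs) + invl xs"

lemma invl_swap:
  "invl (xs @ a # b # ys) + (if a < b then 1 else 0) = invl (xs @ b # a # ys) + (if b < a then 1 else 0)"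
  by (induction xs) auto

lemma invl_sorted: "sorted L \<Longrightarrow> invl L = 0"
  by (induction L) (auto simp: filter_empty_conv)

lemma invl_0_sorted: "invl L = 0 \<Longrightarrow> sorted L"
  by (induction L) (auto simp: filter_empty_conv not_less)

lemma upt_split3:
  assumes "i < n"
  shows "[0..<Suc n] = [0..<i] @ i # Suc i # [Suc (Suc i)..<Suc n]"
proof -
  have "[0..<Suc n] = [0..<i] @ [i..<Suc n]" using assms upt_add_eq_append[of 0 i "Suc n - i"] by simp
  also have "[i..<Suc n] = i # [Suc i..<Suc n]" using assms by (simp add: upt_conv_Cons)
  also have "[Suc i..<Suc n] = Suc i # [Suc (Suc i)..<Suc n]" using assms by (simp add: upt_conv_Cons)
  finally show ?thesis .
qed

lemma adj_trans_other: "k \<noteq> i \<Longrightarrow> k \<noteq> Suc i \<Longrightarrow> adj_trans i k = k"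
  by (simp add: adj_trans_def Transposition.transpose_def)

lemma map_split3:
  assumes "i < n"
  shows "map f [0..<Suc n] = map f [0..<i] @ f i # f (Suc i) # map f [Suc (Suc i)..<Suc n]"
    and "map (f \<circ> adj_trans i) [0..<Suc n] = map f [0..<i] @ f (Suc i) # f i # map f [Suc (Suc i)..<Suc n]"
proof -
  show "map f [0..<Suc n] = map f [0..<i] @ f i # f (Suc i) # map f [Suc (Suc i)..<Suc n]"
    using upt_split3[OF assms] by simp
  have a: "map (f \<circ> adj_trans i) [0..<i] = map f [0..<i]" by (auto simp: adj_trans_other)
  have b: "map (f \<circ> adj_trans i) [Suc (Suc i)..<Suc n] = map f [Suc (Suc i)..<Suc n]"
    by (auto simp: adj_trans_other)
  show "map (f \<circ> adj_trans i) [0..<Suc n] = map f [0..<i] @ f (Suc i) # f i # map f [Suc (Suc i)..<Suc n]"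
    using upt_split3[OF assms] a b by (simp add: adj_trans_def)
qed

definition wl :: "nat \<Rightarrow> (nat \<Rightarrow> nat) \<Rightarrow> nat" where
  "wl n w = invl (map w [0..<Suc n])"

lemma wl_step:
  assumes "i < n"
  shows "wl n (f \<circ> adj_trans i) + (if f (Suc i) < f i then 1 else 0) = wl n f + (if f i < f (Suc i) then 1 else 0)"
  unfolding wl_def map_split3(2)[OF assms, of f] map_split3(1)[OF assms, of f]
  by (rule invl_swap[of "map f [0..<i]" "f (Suc i)" "f i"])

lemma gen_word_Cons: "gen_word (i # is) = adj_trans i \<circ> gen_word is"
  by (simp add: gen_word_def)

lemma gen_word_foldr: "foldr (\<lambda>i f. adj_trans i \<circ> f) is g = gen_word is \<circ> g"
proof (induction "is")
  case Nil then show ?case by (simp add: gen_word_def)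
next
  case (Cons i "is")
  have "foldr (\<lambda>i f. adj_trans i \<circ> f) (i # is) g = adj_trans i \<circ> foldr (\<lambda>i f. adj_trans i \<circ> f) is g"
    by simp
  also have "\<dots> = adj_trans i \<circ> (gen_word is \<circ> g)" by (simp only: Cons.IH)
  also have "\<dots> = gen_word (i # is) \<circ> g" unfolding gen_word_Cons by (rule o_assoc)
  finally show ?case .
qed

lemma gen_word_snoc: "gen_word (is @ [i]) = gen_word is \<circ> adj_trans i"
proof -
  have "gen_word (is @ [i]) = foldr (\<lambda>i f. adj_trans i \<circ> f) is (foldr (\<lambda>i f. adj_trans i \<circ> f) [i] id)"
    unfolding gen_word_def by simp
  also have "foldr (\<lambda>i f. adj_trans i \<circ> f) [i] id = adj_trans i" by simp
  finally show ?thesis by (simp only: gen_word_foldr)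
qed

lemma gen_word_nil: "gen_word [] = id"
  by (simp add: gen_word_def)

lemma wl_id: "wl n id = 0"
proof -
  have "invl [0..<Suc n] = 0" by (rule invl_sorted) simp
  then show ?thesis by (simp add: wl_def)
qed

lemma wl_le: "set is \<subseteq> {..<n} \<Longrightarrow> wl n (gen_word is) \<le> length is"
proof (induction "is" rule: rev_induct)
  case Nil then show ?case unfolding gen_word_nil wl_id by simp
next
  case (snoc i "is")
  have i: "i < n" using snoc.prems by auto
  have "wl n (gen_word is) \<le> length is" using snoc by auto
  moreover have "wl n (gen_word is \<circ> adj_trans i) \<le> wl n (gen_word is) + 1"
    using wl_step[OF i, of "gen_word is"] by (auto split: if_splits)
  ultimately show ?case unfolding gen_word_snoc length_append_singleton by linarith
qed

lemma adj_trans_permutes: "i < n \<Longrightarrow> adj_trans i permutes {0..n}"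
  unfolding adj_trans_def by (rule permutes_swap_id) auto

lemma adj_trans_invol: "f \<circ> adj_trans i \<circ> adj_trans i = f"
  by (simp add: adj_trans_def fun_eq_iff)

lemma perm_inj_map:
  assumes "w permutes {0..n}"
  shows "distinct (map w [0..<Suc n])" "set (map w [0..<Suc n]) = {0..<Suc n}"
proof -
  have e: "{0..n} = {0..<Suc n}" by auto
  have "inj_on w {0..<Suc n}" using permutes_inj_on[OF assms] e by simp
  then show "distinct (map w [0..<Suc n])" by (simp add: distinct_map)
  show "set (map w [0..<Suc n]) = {0..<Suc n}" using permutes_image[OF assms] e by simp
qed

lemma wl_exists:
  assumes "w permutes {0..n}"
  shows "\<exists>is. length is = wl n w \<and> set is \<subseteq> {..<n} \<and> w = gen_word is"
  using assms
proof (induction "wl n w" arbitrary: w rule: less_induct)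
  case less
  show ?case
  proof (cases "wl n w = 0")
    case True
    then have s: "sorted (map w [0..<Suc n])" unfolding wl_def by (rule invl_0_sorted)
    have "map w [0..<Suc n] = [0..<Suc n]"
      using sorted_distinct_set_unique[OF s perm_inj_map(1)[OF less.prems], of "[0..<Suc n]"]
        perm_inj_map(2)[OF less.prems] by simp
    then have "\<forall>k<Suc n. w k = k" by (metis add_0 diff_zero nth_map_upt nth_upt)
    moreover have "\<forall>k. k \<ge> Suc n \<longrightarrow> w k = k" using permutes_not_in[OF less.prems] by auto
    ultimately have "w = id" by (metis eq_id_iff not_less)
    then show ?thesis using True by (intro exI[of _ "[]"]) (simp add: gen_word_nil)
  next
    case False
    then have "\<not> sorted (map w [0..<Suc n])" using invl_sorted unfolding wl_def by auto
    then obtain i where i0: "Suc i < length (map w [0..<Suc n])" "map w [0..<Suc n] ! Suc i < map w [0..<Suc n] ! i"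
      unfolding sorted_iff_nth_Suc by (auto simp: not_le)
    then have i: "Suc i < Suc n" "w (Suc i) < w i" by auto
    have i': "i < n" using i by simp
    define w' where "w' = w \<circ> adj_trans i"
    have p': "w' permutes {0..n}" unfolding w'_def
      by (rule permutes_compose[OF adj_trans_permutes[OF i'] less.prems])
    have "wl n w' + 1 = wl n w + 0" using wl_step[OF i', of w] i(2) unfolding w'_def by simp
    then have lt: "wl n w' < wl n w" by simp
    obtain is' where is': "length is' = wl n w'" "set is' \<subseteq> {..<n}" "w' = gen_word is'"
      using less.hyps[OF lt p'] by blast
    have "gen_word (is' @ [i]) = w" unfolding gen_word_snoc is'(3)[symmetric] w'_def by (rule adj_trans_invol)
    then show ?thesis using is' i' \<open>wl n w' + 1 = wl n w + 0\<close>
      by (intro exI[of _ "is' @ [i]"]) auto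
  qed
qed

lemma word_length_wl:
  assumes "w permutes {0..n}"
  shows "word_length n w = wl n w"
proof -
  let ?P = "\<lambda>k. \<exists>is. length is = k \<and> set is \<subseteq> {..<n} \<and> w = gen_word is"
  have ex: "?P (wl n w)" using wl_exists[OF assms] .
  have le: "word_length n w \<le> wl n w"
    unfolding word_length_def by (rule Least_le[of ?P, OF ex])
  have "?P (word_length n w)"
    unfolding word_length_def by (rule LeastI_ex[of ?P]) (rule exI[of _ "wl n w"], rule ex)
  then obtain js where js: "length js = word_length n w" "set js \<subseteq> {..<n}" "w = gen_word js" by blast
  have "wl n w \<le> word_length n w" using wl_le[OF js(2)] unfolding js(1) js(3)[symmetric] .
  then show ?thesis using le by simp
qed

lemma des_step:
  assumes "w permutes {0..n}" "i < n"
  shows "word_length n (w \<circ> adj_trans i) < word_length n w \<longleftrightarrow> w (Suc i) < w i"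
proof -
  have p: "w \<circ> adj_trans i permutes {0..n}" by (rule permutes_compose[OF adj_trans_permutes[OF assms(2)] assms(1)])
  have inj: "inj w" by (rule permutes_inj[OF assms(1)])
  have ne: "w i \<noteq> w (Suc i)"
  proof
    assume "w i = w (Suc i)"
    then have "i = Suc i" by (rule injD[OF inj])
    then show False by simp
  qed
  have st: "wl n (w \<circ> adj_trans i) + (if w (Suc i) < w i then 1 else 0) = wl n w + (if w i < w (Suc i) then 1 else 0)"
    by (rule wl_step[OF assms(2)])
  show ?thesis unfolding word_length_wl[OF assms(1)] word_length_wl[OF p]
  proof (cases "w (Suc i) < w i")
    case True
    then have "\<not> w i < w (Suc i)" by simp
    then have "wl n (w \<circ> adj_trans i) + 1 = wl n w" using st True by simp
    then show "wl n (w \<circ> adj_trans i) < wl n w \<longleftrightarrow> w (Suc i) < w i" using True by linarith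
  next
    case False
    then have "w i < w (Suc i)" using ne by simp
    then have "wl n (w \<circ> adj_trans i) = wl n w + 1" using st False by simp
    then show "wl n (w \<circ> adj_trans i) < wl n w \<longleftrightarrow> w (Suc i) < w i" using False by linarith
  qed
qed

lemma des_char:
  assumes "w permutes {0..n}"
  shows "des n w = card {i\<in>{..<n}. w (Suc i) < w i}"
proof -
  have "{i\<in>{..<n}. word_length n (w \<circ> adj_trans i) < word_length n w} = {i\<in>{..<n}. w (Suc i) < w i}"
    using des_step[OF assms] by blast
  then show ?thesis unfolding des_def by simp
qed

declare upt_Suc [simp]


declare upt_Suc [simp del]

lemma prec_nth: "prec L a b \<longleftrightarrow> (\<exists>i j. i < j \<and> j < length L \<and> L ! i = a \<and> L ! j = b)"
proof (induction L)
  case Nil then show ?case by simp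
next
  case (Cons x xs)
  show ?case
  proof
    assume "prec (x # xs) a b"
    then consider "x = a" "b \<in> set xs" | "prec xs a b" by auto
    then show "\<exists>i j. i < j \<and> j < length (x # xs) \<and> (x # xs) ! i = a \<and> (x # xs) ! j = b"
    proof cases
      case 1
      then obtain j where "j < length xs" "xs ! j = b" by (auto simp: in_set_conv_nth)
      then show ?thesis using 1 by (intro exI[of _ 0] exI[of _ "Suc j"]) auto
    next
      case 2
      then obtain i j where "i < j" "j < length xs" "xs ! i = a" "xs ! j = b" using Cons.IH by blast
      then show ?thesis by (intro exI[of _ "Suc i"] exI[of _ "Suc j"]) auto
    qed
  next
    assume "\<exists>i j. i < j \<and> j < length (x # xs) \<and> (x # xs) ! i = a \<and> (x # xs) ! j = b"
    then obtain i j where ij: "i < j" "j < length (x # xs)" "(x # xs) ! i = a" "(x # xs) ! j = b" by blast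
    then obtain j' where j': "j = Suc j'" by (cases j) auto
    show "prec (x # xs) a b"
    proof (cases i)
      case 0
      then have "x = a" "b \<in> set xs" using ij j' by (auto simp: in_set_conv_nth)
      then show ?thesis by simp
    next
      case (Suc i')
      then have "prec xs a b" using Cons.IH ij j' by auto
      then show ?thesis by simp
    qed
  qed
qed

lemma set_0n: "{0..n} = {0..<Suc n}"
  by auto

lemma prec_perm:
  assumes "w permutes {0..n}" "a < Suc n" "b < Suc n"
  shows "prec (map w [0..<Suc n]) a b \<longleftrightarrow> inv w a < inv w b"
proof -
  have iw: "inv w permutes {0..n}" by (rule permutes_inv[OF assms(1)])
  have ia: "inv w a < Suc n" "inv w b < Suc n"
    using permutes_in_image[OF iw] assms(2,3) by (auto simp: less_Suc_eq_le)
  have wi: "w (inv w x) = x" for x using permutes_inverses(1)[OF assms(1)] by simp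
  have iw2: "inv w (w x) = x" for x using permutes_inverses(2)[OF assms(1)] by simp
  show ?thesis unfolding prec_nth
  proof
    assume "\<exists>i j. i < j \<and> j < length (map w [0..<Suc n]) \<and> map w [0..<Suc n] ! i = a \<and> map w [0..<Suc n] ! j = b"
    then obtain i j where "i < j" "j < Suc n" "w i = a" "w j = b" by auto
    then show "inv w a < inv w b" using iw2 by auto
  next
    assume "inv w a < inv w b"
    then show "\<exists>i j. i < j \<and> j < length (map w [0..<Suc n]) \<and> map w [0..<Suc n] ! i = a \<and> map w [0..<Suc n] ! j = b"
      using ia wi by (intro exI[of _ "inv w a"] exI[of _ "inv w b"]) auto
  qed
qed

lemma des_dl:
  assumes "w permutes {0..n}"
  shows "des n w = dl (map w [0..<Suc n])"
proof -
  have "dl (map w [0..<Suc n]) = (\<Sum>i<n. if w (Suc i) < w i then 1 else 0)"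
    unfolding dl_sum by (intro sum.cong) (auto simp del: upt_Suc)
  also have "\<dots> = card {i\<in>{..<n}. w (Suc i) < w i}"
    by (simp add: of_bool_def[symmetric] Int_def)
  finally show ?thesis using des_char[OF assms] by simp
qed

lemma des_il:
  assumes "w permutes {0..n}"
  shows "des n (inv w) = il (map w [0..<Suc n])"
proof -
  have "il (map w [0..<Suc n]) = (\<Sum>j<n. of_bool (inv w (Suc j) < inv w j))"
    unfolding il_def using prec_perm[OF assms] by (intro sum.cong) auto
  also have "\<dots> = card {i\<in>{..<n}. inv w (Suc i) < inv w i}"
    by (simp add: Int_def)
  finally show ?thesis using des_char[OF permutes_inv[OF assms]] by simp
qed

lemma bij_map_perm: "bij_betw (\<lambda>w. map w [0..<Suc n]) {w. w permutes {0..n}} (P (Suc n))"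
proof -
  have inj: "inj_on (\<lambda>w. map w [0..<Suc n]) {w. w permutes {0..n}}"
  proof (rule inj_onI)
    fix w w' assume w: "w \<in> {w. w permutes {0..n}}" and w': "w' \<in> {w. w permutes {0..n}}"
      and eq: "map w [0..<Suc n] = map w' [0..<Suc n]"
    show "w = w'"
    proof
      fix k show "w k = w' k"
      proof (cases "k < Suc n")
        case True then show ?thesis using eq by (metis map_eq_conv atLeastLessThan_iff set_upt zero_le)
      next
        case False
        then have "k \<notin> {0..n}" by auto
        then have "w k = k" "w' k = k"
          using permutes_not_in[of w "{0..n}" k] permutes_not_in[of w' "{0..n}" k] w w' by auto
        then show ?thesis by simp
      qed
    qed
  qed
  have img: "(\<lambda>w. map w [0..<Suc n]) ` {w. w permutes {0..n}} = P (Suc n)"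
  proof
    show "(\<lambda>w. map w [0..<Suc n]) ` {w. w permutes {0..n}} \<subseteq> P (Suc n)"
      using perm_inj_map by (auto simp: P_mem)
  next
    show "P (Suc n) \<subseteq> (\<lambda>w. map w [0..<Suc n]) ` {w. w permutes {0..n}}"
    proof
      fix L assume L: "L \<in> P (Suc n)"
      have len: "length L = Suc n" using P_length[OF L] .
      have d: "distinct L" and s: "set L = {0..<Suc n}" using L by (auto simp: P_mem)
      define w where "w i = (if i < Suc n then L ! i else i)" for i
      have "bij_betw w {0..<Suc n} {0..<Suc n}"
      proof (rule bij_betw_imageI)
        show "inj_on w {0..<Suc n}" unfolding w_def using d len by (auto simp: inj_on_def nth_eq_iff_index_eq)
        have "w ` {0..<Suc n} = set L" unfolding w_def using len by (auto simp: set_conv_nth)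
        then show "w ` {0..<Suc n} = {0..<Suc n}" using s by simp
      qed
      then have "w permutes {0..<Suc n}" by (rule bij_imp_permutes) (auto simp: w_def)
      then have wp: "w permutes {0..n}" using set_0n by simp
      have "map w [0..<Suc n] = L" using len by (intro nth_equalityI) (auto simp: w_def)
      then show "L \<in> (\<lambda>w. map w [0..<Suc n]) ` {w. w permutes {0..n}}" using wp by blast
    qed
  qed
  show ?thesis using inj img by (simp add: bij_betw_def)
qed

lemma transfer:
  fixes F :: "nat \<Rightarrow> nat \<Rightarrow> real"
  shows "(\<Sum>w\<in>{w. w permutes {0..n}}. F (des n w) (des n (inv w))) = (\<Sum>L\<in>P (Suc n). F (dl L) (il L))"
proof -
  have "(\<Sum>w\<in>{w. w permutes {0..n}}. F (des n w) (des n (inv w)))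
      = (\<Sum>w\<in>{w. w permutes {0..n}}. F (dl (map w [0..<Suc n])) (il (map w [0..<Suc n])))"
    by (intro sum.cong refl) (simp add: des_dl des_il)
  also have "\<dots> = (\<Sum>L\<in>P (Suc n). F (dl L) (il L))"
    by (rule sum.reindex_bij_betw[OF bij_map_perm, of "\<lambda>L. F (dl L) (il L)"])
  finally show ?thesis .
qed

lemma symmetry:
  fixes F :: "nat \<Rightarrow> nat \<Rightarrow> real"
  shows "(\<Sum>w\<in>{w. w permutes {0..n}}. F (des n w) (des n (inv w)))
       = (\<Sum>w\<in>{w. w permutes {0..n}}. F (des n (inv w)) (des n w))"
  by (rule sum.reindex_bij_witness[of _ inv inv]) (auto simp: permutes_inv permutes_inv_inv)

declare upt_Suc [simp]


definition "e1r (y::real) = (y - 1) / 2"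
definition "e2r (y::real) = 1/3 - 5/12 * y + 1/4 * y ^ 2"
definition "e3r (y::real) = -1/4 + 3/8 * y - 1/4 * y ^ 2 + 1/8 * y ^ 3"
definition "e4r (y::real) = 1/5 - 41/120 * y + 13/48 * y ^ 2 - 1/8 * y ^ 3 + 1/16 * y ^ 4"

lemma e_r: "e1 N = e1r (real N)" "e2 N = e2r (real N)" "e3 N = e3r (real N)" "e4 N = e4r (real N)"
  by (simp_all add: e1_def e1r_def e2_def e2r_def e3_def e3r_def e4_def e4r_def)

lemma poly0: "(x+1)*x*(x^4 - 8*x^3*e1r(x+1) + 12*x^2*e2r(x+1) - 8*x*e3r(x+1) + 2*e4r(x+1))
  = 2/15*x + 17/60*x^2 + 83/120*x^3 + 19/24*x^4 - 5/8*x^5 - 7/8*x^6"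
  unfolding e1r_def e2r_def e3r_def e4r_def by (simp add: field_simps eval_nat_numeral)

lemma poly1a: "(x+1)*x*(8*e3r(x+1) - 24*x*e2r(x+1) + 12*x^2*e1r(x+1)) = x^5 - 3*x^3 - 2*x^2"
  unfolding e1r_def e2r_def e3r_def by (simp add: field_simps eval_nat_numeral)

lemma poly1b: "x*((8 - 24*x + 12*x^2) + (24 - 48*x) * e1r x + 24 * e2r x) = -6*x^3 + 2*x^2 + 4*x"
  unfolding e1r_def e2r_def by (simp add: field_simps eval_nat_numeral)

lemma poly2a: "(x+1)*x*(6 * e2r (x+1)) = 3/2*x^4 + 2*x^3 + 3/2*x^2 + x"
  unfolding e2r_def by (simp add: field_simps eval_nat_numeral)

lemma poly2b: "x*(6 + 12 * e1r x) = 6*x^2"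
  unfolding e1r_def by (simp add: field_simps eval_nat_numeral)

lemma poly_total:
  "(2/15*(x::real) + 17/60*x^2 + 83/120*x^3 + 19/24*x^4 - 5/8*x^5 - 7/8*x^6)
   + x * ((x^5 - 3*x^3 - 2*x^2) + (-6*x^3 + 2*x^2 + 4*x)) / 2
   + (x * ((3/2*x^4 + 2*x^3 + 3/2*x^2 + x) + 6*x^2) / 2
      + 2 * (x - 1) * ((3/2*x^4 + 2*x^3 + 3/2*x^2 + x) + 3 * (6*x^2) + 2 * 12) / 6
      + (x - 1) * (x - 1 - 1) * ((3/2*x^4 + 2*x^3 + 3/2*x^2 + x) + 2 * (6*x^2) + 12) / 4)
   = (x+1)*x*(5*x^2 + 79*x + 258)/60 - (5*x+2)"
  by (simp add: field_simps eval_nat_numeral)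

lemma fac: "(F::real)*P0 + x*(F*a + F*b)/2 + (x*((F*c + F*d)/2) + 2*(x-1)*((F*c + 3*(F*d) + 2*(F*12))/6) + (x-1)*(x-1-1)*((F*c + 2*(F*d) + F*12)/4))
   = F*(P0 + x*(a+b)/2 + (x*(c+d)/2 + 2*(x-1)*(c + 3*d + 2*12)/6 + (x-1)*(x-1-1)*(c + 2*d + 12)/4))"
  by (simp add: field_simps)

definition G0 :: "real \<Rightarrow> nat \<Rightarrow> real" where
  "G0 x d = 2 * real d ^ 4 - 8 * x * real d ^ 3 + 12 * x ^ 2 * real d ^ 2 - 8 * x ^ 3 * real d + x ^ 4"
definition G1 :: "real \<Rightarrow> nat \<Rightarrow> real" where
  "G1 x d = 8 * real d ^ 3 - 24 * x * real d ^ 2 + 12 * x ^ 2 * real d"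
definition G2 :: "real \<Rightarrow> nat \<Rightarrow> real" where
  "G2 x d = 6 * real d ^ 2"

lemma G0_lin: "G0 x = (\<lambda>d. x^4 + (-8 * x^3) * real d + (12 * x^2) * real d ^ 2 + (-8 * x) * real d ^ 3 + 2 * real d ^ 4)"
  by (auto simp: G0_def fun_eq_iff algebra_simps)
lemma G1_lin: "G1 x = (\<lambda>d. 0 + (12 * x^2) * real d + (-24 * x) * real d ^ 2 + 8 * real d ^ 3 + 0 * real d ^ 4)"
  by (auto simp: G1_def fun_eq_iff algebra_simps)
lemma D1G1_lin: "D1 (G1 x) = (\<lambda>d. (8 - 24*x + 12*x^2) + (24 - 48*x) * real d + 24 * real d ^ 2 + 0 * real d ^ 3 + 0 * real d ^ 4)"
  by (auto simp: D1_def G1_def fun_eq_iff field_simps eval_nat_numeral)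
lemma G2_lin: "G2 x = (\<lambda>d. 0 + 0 * real d + 6 * real d ^ 2 + 0 * real d ^ 3 + 0 * real d ^ 4)"
  by (auto simp: G2_def fun_eq_iff)
lemma D1G2_lin: "D1 (G2 x) = (\<lambda>d. 6 + 12 * real d + 0 * real d ^ 2 + 0 * real d ^ 3 + 0 * real d ^ 4)"
  by (auto simp: D1_def G2_def fun_eq_iff field_simps eval_nat_numeral)
lemma D2G2: "D2 (G2 x) = (\<lambda>d. 12)"
  by (auto simp: D2_def G2_def fun_eq_iff field_simps eval_nat_numeral)

lemma Q3: "Q 3 f = f 0 + 4 * f 1 + f 2"
  by (metis Q3' numeral_3_eq_3)

lemma Q_const: "Q N (\<lambda>_. c) = c * fact N"
  unfolding Q_def by simp

lemma Qn_small:
  assumes "n \<ge> 3"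
  shows "Q n (\<lambda>d. real d) = fact n * e1 n \<and> Q n (\<lambda>d. real d ^ 2) = fact n * e2 n"
proof (cases "n = 3")
  case True then show ?thesis by (simp add: Q3 e1_def e2_def fact_numeral)
next
  case False
  then have "n \<ge> 4" using assms by simp
  then show ?thesis using Q_closed by blast
qed

lemma list_sum_q:
  assumes n: "n \<ge> 3"
  shows "(\<Sum>L\<in>P (Suc n). G0 (real n) (dl L) + G1 (real n) (dl L) * real (il L) + G2 (real n) (dl L) * real (il L) ^ 2)
    = fact (n - 1) * ((real n + 1) * real n * (5 * real n ^ 2 + 79 * real n + 258) / 60 - (5 * real n + 2))"
proof -
  define x where "x = real n"
  define F where "F = (fact (n - 1) :: real)"
  have fn: "fact n = x * F" unfolding x_def F_def using n by (simp add: fact_reduce)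
  have fN: "fact (Suc n) = (x + 1) * x * F" using fn unfolding x_def by simp
  have QN: "Q (Suc n) (\<lambda>d. real d) = fact (Suc n) * e1r (x + 1)"
    "Q (Suc n) (\<lambda>d. real d ^ 2) = fact (Suc n) * e2r (x + 1)"
    "Q (Suc n) (\<lambda>d. real d ^ 3) = fact (Suc n) * e3r (x + 1)"
    "Q (Suc n) (\<lambda>d. real d ^ 4) = fact (Suc n) * e4r (x + 1)"
    using Q_closed[of "Suc n"] n unfolding e_r x_def by (auto simp: add.commute)
  have Qn: "Q n (\<lambda>d. real d) = fact n * e1r x" "Q n (\<lambda>d. real d ^ 2) = fact n * e2r x"
    using Qn_small[OF n] unfolding e_r x_def by auto
  have c0: "Q (Suc n) (G0 x) = F * (2/15*x + 17/60*x^2 + 83/120*x^3 + 19/24*x^4 - 5/8*x^5 - 7/8*x^6)"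
  proof -
    have "Q (Suc n) (G0 x) = fact (Suc n) * (x^4 - 8*x^3*e1r(x+1) + 12*x^2*e2r(x+1) - 8*x*e3r(x+1) + 2*e4r(x+1))"
      unfolding G0_lin Q_lin Q_one QN by (simp add: algebra_simps)
    also have "\<dots> = F * ((x+1)*x*(x^4 - 8*x^3*e1r(x+1) + 12*x^2*e2r(x+1) - 8*x*e3r(x+1) + 2*e4r(x+1)))"
      unfolding fN by (simp add: algebra_simps)
    finally show ?thesis unfolding poly0 .
  qed
  have c1a: "Q (Suc n) (G1 x) = F * (x^5 - 3*x^3 - 2*x^2)"
  proof -
    have "Q (Suc n) (G1 x) = fact (Suc n) * (8*e3r(x+1) - 24*x*e2r(x+1) + 12*x^2*e1r(x+1))"
      unfolding G1_lin Q_lin Q_one QN by (simp add: algebra_simps)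
    also have "\<dots> = F * ((x+1)*x*(8*e3r(x+1) - 24*x*e2r(x+1) + 12*x^2*e1r(x+1)))"
      unfolding fN by (simp add: algebra_simps)
    finally show ?thesis unfolding poly1a .
  qed
  have c1b: "Q n (D1 (G1 x)) = F * (-6*x^3 + 2*x^2 + 4*x)"
  proof -
    have "Q n (D1 (G1 x)) = fact n * ((8 - 24*x + 12*x^2) + (24 - 48*x) * e1r x + 24 * e2r x)"
      unfolding D1G1_lin Q_lin Q_one Qn by (simp add: algebra_simps)
    also have "\<dots> = F * (x*((8 - 24*x + 12*x^2) + (24 - 48*x) * e1r x + 24 * e2r x))"
      unfolding fn by (simp add: algebra_simps)
    finally show ?thesis unfolding poly1b .
  qed
  have c2a: "Q (Suc n) (G2 x) = F * (3/2*x^4 + 2*x^3 + 3/2*x^2 + x)"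
  proof -
    have "Q (Suc n) (G2 x) = fact (Suc n) * (6 * e2r (x + 1))"
      unfolding G2_lin Q_lin Q_one QN by (simp add: algebra_simps)
    also have "\<dots> = F * ((x+1)*x*(6 * e2r (x+1)))"
      unfolding fN by (simp add: algebra_simps)
    finally show ?thesis unfolding poly2a .
  qed
  have c2b: "Q n (D1 (G2 x)) = F * (6*x^2)"
  proof -
    have "Q n (D1 (G2 x)) = fact n * (6 + 12 * e1r x)"
      unfolding D1G2_lin Q_lin Q_one Qn by (simp add: algebra_simps)
    also have "\<dots> = F * (x*(6 + 12 * e1r x))"
      unfolding fn by (simp add: algebra_simps)
    finally show ?thesis unfolding poly2b .
  qed
  have c2c: "Q (n - 1) (D2 (G2 x)) = F * 12"
    unfolding D2G2 Q_const F_def by simp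
  obtain M' where M'0: "n = Suc M'" using n by (cases n) auto
  then have M': "n = Suc M'" "1 \<le> M'" using n by auto
  have xM: "real M' = x - 1" unfolding x_def M' by simp
  have s1: "(\<Sum>L\<in>P (Suc n). G1 x (dl L) * real (il L)) = x * (Q (Suc n) (G1 x) + Q n (D1 (G1 x))) / 2"
    unfolding x_def by (rule S1)
  have s2: "(\<Sum>L\<in>P (Suc n). G2 x (dl L) * real (il L) ^ 2)
    = x * ((Q (Suc n) (G2 x) + Q n (D1 (G2 x))) / 2)
      + 2 * (x - 1) * ((Q (Suc n) (G2 x) + 3 * Q n (D1 (G2 x)) + 2 * Q (n - 1) (D2 (G2 x))) / 6)
      + (x - 1) * (x - 1 - 1) * ((Q (Suc n) (G2 x) + 2 * Q n (D1 (G2 x)) + Q (n - 1) (D2 (G2 x))) / 4)"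
    using S2[OF M'(2), of "G2 x"] unfolding M'(1)[symmetric] xM[symmetric] by (simp add: x_def M')
  have "(\<Sum>L\<in>P (Suc n). G0 x (dl L) + G1 x (dl L) * real (il L) + G2 x (dl L) * real (il L) ^ 2)
    = Q (Suc n) (G0 x) + (\<Sum>L\<in>P (Suc n). G1 x (dl L) * real (il L)) + (\<Sum>L\<in>P (Suc n). G2 x (dl L) * real (il L) ^ 2)"
    unfolding Q_def by (simp add: sum.distrib)
  also have "\<dots> = F * ((2/15*x + 17/60*x^2 + 83/120*x^3 + 19/24*x^4 - 5/8*x^5 - 7/8*x^6)
   + x * ((x^5 - 3*x^3 - 2*x^2) + (-6*x^3 + 2*x^2 + 4*x)) / 2
   + (x * ((3/2*x^4 + 2*x^3 + 3/2*x^2 + x) + 6*x^2) / 2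
      + 2 * (x - 1) * ((3/2*x^4 + 2*x^3 + 3/2*x^2 + x) + 3 * (6*x^2) + 2 * 12) / 6
      + (x - 1) * (x - 1 - 1) * ((3/2*x^4 + 2*x^3 + 3/2*x^2 + x) + 2 * (6*x^2) + 12) / 4))"
    unfolding s1 s2 c0 c1a c1b c2a c2b c2c by (rule fac)
  also have "\<dots> = F * ((x+1)*x*(5*x^2 + 79*x + 258)/60 - (5*x+2))" unfolding poly_total ..
  finally show ?thesis unfolding x_def F_def .
qed

lemma list_sum_mean:
  assumes n: "n \<ge> 3"
  shows "(\<Sum>L\<in>P (Suc n). real (dl L) + real (il L)) = real n * fact (Suc n)"
proof -
  have "(\<Sum>L\<in>P (Suc n). 1 * real (il L)) = real n * (Q (Suc n) (\<lambda>_. 1) + Q n (D1 (\<lambda>_. 1))) / 2"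
    by (rule S1)
  also have "D1 (\<lambda>_. 1) = (\<lambda>_. 0)" by (simp add: D1_def fun_eq_iff)
  finally have a: "(\<Sum>L\<in>P (Suc n). real (il L)) = real n * fact (Suc n) / 2" by (simp add: Q_const)
  have "Q (Suc n) (\<lambda>d. real d) = fact (Suc n) * e1 (Suc n)" using Q_closed[of "Suc n"] n by simp
  then have b: "(\<Sum>L\<in>P (Suc n). real (dl L)) = real n * fact (Suc n) / 2"
    unfolding Q_def e1_def by simp
  show ?thesis using a b by (simp add: sum.distrib)
qed


lemma p_q_sym:
  fixes A B x :: real
  shows "(A + B - x) ^ 4 =
    ((2 * A ^ 4 - 8 * x * A ^ 3 + 12 * x ^ 2 * A ^ 2 - 8 * x ^ 3 * A + x ^ 4)
      + (8 * A ^ 3 - 24 * x * A ^ 2 + 12 * x ^ 2 * A) * B + (6 * A ^ 2) * B ^ 2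
     + ((2 * B ^ 4 - 8 * x * B ^ 3 + 12 * x ^ 2 * B ^ 2 - 8 * x ^ 3 * B + x ^ 4)
      + (8 * B ^ 3 - 24 * x * B ^ 2 + 12 * x ^ 2 * B) * A + (6 * B ^ 2) * A ^ 2)) / 2"
  by (simp add: field_simps eval_nat_numeral)

lemma final_div:
  fixes F x c P R :: real
  assumes "F > 0" "x > 0" "c > 0"
  shows "F * (c * x * P / 60 - R) / (c * x * F) = P / 60 - R / (x * c)"
proof -
  have "F * (c * x * P / 60 - R) / (c * x * F) = (c * x * P / 60 - R) / (c * x)"
    using assms by simp
  also have "\<dots> = P / 60 - R / (x * c)" using assms by (simp add: field_simps)
  finally show ?thesis .
qed

theorem proposition3p6:
  fixes n :: nat
  assumes "n \<ge> 3"
  shows "measure_pmf.expectation (unif_A n)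
           (\<lambda>w. (T_stat n w - measure_pmf.expectation (unif_A n) (T_stat n)) ^ 4)
         = (5 * real n ^ 2 + 79 * real n + 258) / 60 - (5 * real n + 2) / (real n * (real n + 1))"
proof -
  let ?S = "{w. w permutes {0..n}}"
  define x where "x = real n"
  have fin: "finite ?S" by (rule finite_permutations) simp
  have ne: "?S \<noteq> {}" using permutes_id by blast
  have card: "card ?S = fact (Suc n)" by (rule card_permutations) auto
  have E: "measure_pmf.expectation (unif_A n) f = (\<Sum>w\<in>?S. f w) / fact (Suc n)" for f :: "(nat \<Rightarrow> nat) \<Rightarrow> real"
  proof -
    have c: "real (card ?S) = fact (Suc n)" unfolding card by (rule of_nat_fact)
    show ?thesis unfolding unif_A_def integral_pmf_of_set[OF ne fin] c ..
  qed
  define q where "q a b = G0 x a + G1 x a * real b + G2 x a * real b ^ 2" for a b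
  have mu: "measure_pmf.expectation (unif_A n) (T_stat n) = x"
  proof -
    have "(\<Sum>w\<in>?S. T_stat n w) = (\<Sum>w\<in>?S. (\<lambda>a b. real a + real b) (des n w) (des n (inv w)))"
      unfolding T_stat_def by simp
    also have "\<dots> = (\<Sum>L\<in>P (Suc n). real (dl L) + real (il L))" by (rule transfer)
    also have "\<dots> = real n * fact (Suc n)" by (rule list_sum_mean[OF assms])
    finally show ?thesis unfolding E x_def by simp
  qed
  have pq: "(T_stat n w - x) ^ 4 = (q (des n w) (des n (inv w)) + q (des n (inv w)) (des n w)) / 2" for w
    unfolding T_stat_def q_def G0_def G1_def G2_def of_nat_add by (rule p_q_sym)
  have "(\<Sum>w\<in>?S. (T_stat n w - x) ^ 4)
      = ((\<Sum>w\<in>?S. q (des n w) (des n (inv w))) + (\<Sum>w\<in>?S. q (des n (inv w)) (des n w))) / 2"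
    unfolding pq sum_divide_distrib[symmetric] sum.distrib ..
  also have "(\<Sum>w\<in>?S. q (des n (inv w)) (des n w)) = (\<Sum>w\<in>?S. q (des n w) (des n (inv w)))"
    by (rule symmetry[symmetric])
  also have "(\<Sum>w\<in>?S. q (des n w) (des n (inv w))) = (\<Sum>L\<in>P (Suc n). q (dl L) (il L))"
    by (rule transfer)
  also have "\<dots> = fact (n - 1) * ((real n + 1) * real n * (5 * real n ^ 2 + 79 * real n + 258) / 60 - (5 * real n + 2))"
    unfolding q_def x_def by (rule list_sum_q[OF assms])
  finally have tot: "(\<Sum>w\<in>?S. (T_stat n w - x) ^ 4) =
      fact (n - 1) * ((real n + 1) * real n * (5 * real n ^ 2 + 79 * real n + 258) / 60 - (5 * real n + 2))"
    by simp
  have fN: "(fact (Suc n) :: real) = (real n + 1) * real n * fact (n - 1)"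
    using assms by (simp add: fact_reduce)
  have pos: "real n > 0" "(fact (n - 1) :: real) > 0" using assms by auto
  have "measure_pmf.expectation (unif_A n) (\<lambda>w. (T_stat n w - measure_pmf.expectation (unif_A n) (T_stat n)) ^ 4)
      = (\<Sum>w\<in>?S. (T_stat n w - x) ^ 4) / fact (Suc n)" unfolding mu by (rule E)
  also have "\<dots> = fact (n - 1) * ((real n + 1) * real n * (5 * real n ^ 2 + 79 * real n + 258) / 60 - (5 * real n + 2))
      / ((real n + 1) * real n * fact (n - 1))" unfolding tot fN ..
  also have "\<dots> = (5 * real n ^ 2 + 79 * real n + 258) / 60 - (5 * real n + 2) / (real n * (real n + 1))"
    by (rule final_div) (use pos in auto)
  finally show ?thesis .
qed


end
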